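(* Consider RLSVI run (with any parameters) on a random finite-horizon MDP $\mathcal{M}$ as in the context. For any episode $\ell \in \mathbb{N}$, if \[ \mathbb{E}\Big[\max_{a\in\mathcal{A}} Q_{\ell,0}(x_0^\ell,a)\Big] \geq \mathbb{E}\Big[\max_{a\in\mathcal{A}} Q^*_{\mathcal{M},0}(x_0^\ell,a)\Big], \] then \[ \mathbb{E}\big[V^*_{\mathcal{M},0}(x_0^\ell) - V^{\pi_\ell}_{\mathcal{M},0}(x_0^\ell)\big] \leq \mathbb{E}\Big[\sum_{t=0}^{H-1} (F_{\ell,t}Q_{\ell,t+1} - F_{\mathcal{M},t}Q_{\ell,t+1})(x_t^\ell, a_t^\ell)\Big]. \]
   Context: Setting. $\mathcal{X}$ finite state set, $\mathcal{A}$ finite action set, horizon $H$. $\mathcal{M}$ is drawn from some prior; it specifies an initial distribution $\rho$ and for each $(t,x,a)$, $t\in\{0,\dots,H-1\}$, a distribution of outcomes $(r_{t+1},x_{t+1}) \in \{0,1\}\times\mathcal{X}$. Episode $\ell$: $x_0^\ell\sim\rho$, and for $t=0,\dots,H-1$ the agent picks $a_t^\ell$ and observes $(r_{t+1}^\ell,x_{t+1}^\ell)$. $V^\pi_{\mathcal{M},0}(x) = \mathbb{E}_{\mathcal{M},\pi}[\sum_{t=0}^{H-1} r_{t+1}\mid x_0=x]$, $V^*_{\mathcal{M},0} = \max_\pi V^\pi_{\mathcal{M},0}$. $F_{\mathcal{M},t}Q(x,a) = \mathbb{E}[r_{t+1} + \max_{a'}Q(x_{t+1},a')\mid \mathcal{M},x_t=x,a_t=a]$;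 $Q^*_{\mathcal{M},H}=0$ and $Q^*_{\mathcal{M},t} = F_{\mathcal{M},t}Q^*_{\mathcal{M},t+1}$. RLSVI with parameters $\bar\theta$, $v>0$, $\lambda>0$: $D_{\ell-1}(t,x,a)$ is the multiset of outcomes $(r^k_{t+1},x^k_{t+1})$ from episodes $k<\ell$ with $x^k_t=x$, $a^k_t=a$, $n_\ell(t,x,a)$ its size, $\sigma^2_\ell(t,x,a) = (1/\lambda + n_\ell(t,x,a)/v)^{-1}$, $w_\ell(t,x,a) = \sigma_\ell(t,x,a)\xi_{\ell,t,x,a}$ with $\xi$'s i.i.d. $N(0,1)$ independent of everything else, and \[F_{\ell,t}Q(x,a) = \sigma^2_\ell(t,x,a)\Big(\frac{\bar\theta_{t,x,a}}{\lambda} + \frac1v\sum_{(r,x')\in D_{\ell-1}(t,x,a)}\big(r + \max_{a'}Q(x',a')\big)\Big) + w_\ell(t,x,a).\] $Q_{\ell,H}=0$, $Q_{\ell,t} = F_{\ell,t}Q_{\ell,t+1}$, and $\pi_\ell$ is greedy: $\pi_{\ell,t}(x)\in\arg\max_aQ_{\ell,t}(x,a)$, so $a^\ell_t = \pi_{\ell,t}(x^\ell_t)$. Expectations are over $\mathcal{M}$, the episode randomness and the RLSVI noise. *)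

theory Defs
  imports "HOL-Probability.Probability"
begin

text \<open>An MDP: initial distribution and, for each (t,x,a), a distribution of
  outcomes (r_{t+1}, x_{t+1}); the reward r in {0,1} is encoded as a bool.\<close>
record ('s, 'a) mdp =
  init  :: "'s pmf"
  trans :: "nat \<Rightarrow> 's \<Rightarrow> 'a \<Rightarrow> (bool \<times> 's) pmf"

type_synonym ('s, 'a) qfun = "'s \<Rightarrow> 'a \<Rightarrow> real"

text \<open>An episode: initial state x_0 and the list of steps (a_t, r_{t+1}, x_{t+1}).\<close>
type_synonym ('s, 'a) episode = "'s \<times> ('a \<times> bool \<times> 's) list"

definition vmax :: "('s, 'a::finite) qfun \<Rightarrow> 's \<Rightarrow> real" where
  "vmax Q x = Max (range (Q x))"

definition bellman :: "('s, 'a::finite) mdp \<Rightarrow> nat \<Rightarrow> ('s, 'a) qfun \<Rightarrow> ('s, 'a) qfun" where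
  "bellman M t Q x a =
     measure_pmf.expectation (trans M t x a) (\<lambda>(r, x'). of_bool r + vmax Q x')"

function backward :: "nat \<Rightarrow> (nat \<Rightarrow> ('s, 'a) qfun \<Rightarrow> ('s, 'a) qfun) \<Rightarrow> nat \<Rightarrow> ('s, 'a) qfun" where
  "backward H Op t = (if H \<le> t then (\<lambda>_ _. 0) else Op t (backward H Op (Suc t)))"
  by pat_completeness auto
termination by (relation "Wellfounded.measure (\<lambda>(H, Op, t). H - t)") auto

definition Qstar :: "('s, 'a::finite) mdp \<Rightarrow> nat \<Rightarrow> nat \<Rightarrow> ('s, 'a) qfun" where
  "Qstar M H t = backward H (bellman M) t"

fun traj :: "('s, 'a) mdp \<Rightarrow> (nat \<Rightarrow> 's \<Rightarrow> 'a) \<Rightarrow> nat \<Rightarrow> nat \<Rightarrow> 's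
             \<Rightarrow> ('a \<times> bool \<times> 's) list pmf" where
  "traj M \<pi> t 0 x = return_pmf []"
| "traj M \<pi> t (Suc n) x =
     bind_pmf (trans M t x (\<pi> t x))
       (\<lambda>(r, x'). map_pmf (\<lambda>rest. (\<pi> t x, r, x') # rest) (traj M \<pi> (Suc t) n x'))"

definition episode_pmf :: "('s, 'a) mdp \<Rightarrow> nat \<Rightarrow> (nat \<Rightarrow> 's \<Rightarrow> 'a) \<Rightarrow> ('s, 'a) episode pmf" where
  "episode_pmf M H \<pi> = bind_pmf (init M) (\<lambda>x0. map_pmf (\<lambda>s. (x0, s)) (traj M \<pi> 0 H x0))"

fun ep_state :: "('s, 'a) episode \<Rightarrow> nat \<Rightarrow> 's" where
  "ep_state (x0, s) 0 = x0"
| "ep_state (x0, s) (Suc t) = snd (snd (s ! t))"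

definition ep_action :: "('s, 'a) episode \<Rightarrow> nat \<Rightarrow> 'a" where
  "ep_action e t = fst (snd e ! t)"

definition Vpi :: "('s, 'a) mdp \<Rightarrow> nat \<Rightarrow> (nat \<Rightarrow> 's \<Rightarrow> 'a) \<Rightarrow> 's \<Rightarrow> real" where
  "Vpi M H \<pi> x = measure_pmf.expectation (traj M \<pi> 0 H x)
                    (\<lambda>s. \<Sum>t<H. of_bool (fst (snd (s ! t))))"

definition Vstar :: "('s, 'a) mdp \<Rightarrow> nat \<Rightarrow> 's \<Rightarrow> real" where
  "Vstar M H x = (SUP \<pi>. Vpi M H \<pi> x)"

definition obs :: "('s, 'a) episode list \<Rightarrow> nat \<Rightarrow> 's \<Rightarrow> 'a \<Rightarrow> (bool \<times> 's) list" where
  "obs h t x a = concat (map (\<lambda>e. if t < length (snd e) \<and> ep_state e t = x \<and> ep_action e t = a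
                                 then [snd (snd e ! t)] else []) h)"

definition sig2 :: "real \<Rightarrow> real \<Rightarrow> nat \<Rightarrow> real" where
  "sig2 lam v n = inverse (1 / lam + real n / v)"

definition rlsvi_op :: "(nat \<Rightarrow> 's \<Rightarrow> 'a \<Rightarrow> real) \<Rightarrow> real \<Rightarrow> real \<Rightarrow> ('s, 'a::finite) episode list
      \<Rightarrow> (nat \<times> 's \<times> 'a \<Rightarrow> real) \<Rightarrow> nat \<Rightarrow> ('s, 'a) qfun \<Rightarrow> ('s, 'a) qfun" where
  "rlsvi_op th v lam h xi t Q x a =
     sig2 lam v (length (obs h t x a)) *
       (th t x a / lam + (1 / v) * (\<Sum>y \<leftarrow> obs h t x a. of_bool (fst y) + vmax Q (snd y)))
     + sqrt (sig2 lam v (length (obs h t x a))) * xi (t, x, a)"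

definition Qrl :: "(nat \<Rightarrow> 's \<Rightarrow> 'a \<Rightarrow> real) \<Rightarrow> real \<Rightarrow> real \<Rightarrow> nat \<Rightarrow> ('s, 'a::finite) episode list
      \<Rightarrow> (nat \<times> 's \<times> 'a \<Rightarrow> real) \<Rightarrow> nat \<Rightarrow> ('s, 'a) qfun" where
  "Qrl th v lam H h xi t = backward H (rlsvi_op th v lam h xi) t"

text \<open>Greedy choice; ties broken towards the least action (a fixed convention).\<close>
definition greedy :: "('a::{finite, linorder} \<Rightarrow> real) \<Rightarrow> 'a" where
  "greedy f = (LEAST a. \<forall>b. f b \<le> f a)"

definition pol :: "(nat \<Rightarrow> 's \<Rightarrow> 'a \<Rightarrow> real) \<Rightarrow> real \<Rightarrow> real \<Rightarrow> nat \<Rightarrow> ('s, 'a::{finite,linorder}) episode list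
      \<Rightarrow> (nat \<times> 's \<times> 'a \<Rightarrow> real) \<Rightarrow> nat \<Rightarrow> 's \<Rightarrow> 'a" where
  "pol th v lam H h xi t x = greedy (Qrl th v lam H h xi t x)"

definition noiseM :: "nat \<Rightarrow> (nat \<times> 's::finite \<times> 'a::finite \<Rightarrow> real) measure" where
  "noiseM H = PiM ({..<H} \<times> UNIV) (\<lambda>_. std_normal_distribution)"

fun histM :: "(nat \<Rightarrow> 's \<Rightarrow> 'a \<Rightarrow> real) \<Rightarrow> real \<Rightarrow> real \<Rightarrow> nat \<Rightarrow> ('s::finite, 'a::{finite,linorder}) mdp
      \<Rightarrow> nat \<Rightarrow> ('s, 'a) episode list measure" where
  "histM th v lam H M 0 = return (count_space UNIV) []"
| "histM th v lam H M (Suc k) =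
     histM th v lam H M k \<bind> (\<lambda>h. noiseM H \<bind> (\<lambda>xi.
       measure_pmf (episode_pmf M H (pol th v lam H h xi)) \<bind> (\<lambda>e.
         return (count_space UNIV) (h @ [e]))))"

text \<open>Expectation, in episode l, of a quantity depending on the MDP M, the history h
  of episodes 0..l-1, the RLSVI noise xi of episode l and the episode l itself.\<close>
definition rl_expect :: "(nat \<Rightarrow> 's \<Rightarrow> 'a \<Rightarrow> real) \<Rightarrow> real \<Rightarrow> real \<Rightarrow> nat
      \<Rightarrow> ('s::finite, 'a::{finite,linorder}) mdp measure \<Rightarrow> nat
      \<Rightarrow> (('s, 'a) mdp \<Rightarrow> ('s, 'a) episode list \<Rightarrow> (nat \<times> 's \<times> 'a \<Rightarrow> real) \<Rightarrow> ('s, 'a) episode \<Rightarrow> real)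
      \<Rightarrow> real" where
  "rl_expect th v lam H prior l f =
     (\<integral>M. (\<integral>h. (\<integral>xi. (\<integral>e. f M h xi e
                 \<partial>measure_pmf (episode_pmf M H (pol th v lam H h xi)))
               \<partial>noiseM H)
             \<partial>histM th v lam H M l)
        \<partial>prior)"

end

theory Submission
  imports Defs
begin


definition stt :: "'s \<Rightarrow> ('a \<times> bool \<times> 's) list \<Rightarrow> nat \<Rightarrow> 's" where
  "stt x s i = (if i = 0 then x else snd (snd (s ! (i - 1))))"
definition act :: "('a \<times> bool \<times> 's) list \<Rightarrow> nat \<Rightarrow> 'a" where
  "act s i = fst (s ! i)"
definition rew :: "('a \<times> bool \<times> 's) list \<Rightarrow> nat \<Rightarrow> real" where
  "rew s i = of_bool (fst (snd (s ! i)))"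

lemma stt_Cons_Suc[simp]: "stt x (c # s) (Suc i) = stt (snd (snd c)) s i"
  by (simp add: stt_def nth_Cons')
lemma stt_0[simp]: "stt x s 0 = x" by (simp add: stt_def)
lemma act_Cons_Suc[simp]: "act (c # s) (Suc i) = act s i" by (simp add: act_def)
lemma act_Cons_0[simp]: "act (c # s) 0 = fst c" by (simp add: act_def)
lemma rew_Cons_Suc[simp]: "rew (c # s) (Suc i) = rew s i" by (simp add: rew_def)
lemma rew_Cons_0[simp]: "rew (c # s) 0 = of_bool (fst (snd c))" by (simp add: rew_def)

lemma traj_support:
  "s \<in> set_pmf (traj M \<pi> t n x) \<Longrightarrow> length s = n \<and> (\<forall>i<n. act s i = \<pi> (t+i) (stt x s i))"
proof (induction n arbitrary: t x s)
  case 0 then show ?case by simp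
next
  case (Suc n)
  from Suc.prems obtain y where y: "y \<in> set_pmf (trans M t x (\<pi> t x))"
    and sy: "s \<in> set_pmf ((\<lambda>(r, x'). map_pmf (\<lambda>rest. (\<pi> t x, r, x') # rest) (traj M \<pi> (Suc t) n x')) y)"
    by (simp only: traj.simps set_bind_pmf) blast
  obtain r x' where yy: "y = (r, x')" by (cases y)
  from sy obtain s' where s: "s = (\<pi> t x, r, x') # s'" and s': "s' \<in> set_pmf (traj M \<pi> (Suc t) n x')"
    unfolding yy by auto
  have IH: "length s' = n \<and> (\<forall>i<n. act s' i = \<pi> (Suc t+i) (stt x' s' i))" by (rule Suc.IH[OF s'])
  show ?case
  proof (intro conjI allI impI)
    show "length s = Suc n" using IH s by simp
    fix i assume i: "i < Suc n"
    show "act s i = \<pi> (t + i) (stt x s i)"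
    proof (cases i)
      case 0 then show ?thesis by (simp add: s)
    next
      case (Suc j) then show ?thesis using IH i by (simp add: s)
    qed
  qed
qed

lemma fin_traj: "finite (set_pmf (traj M \<pi> t n (x::'s::finite)) :: (('a::finite \<times> bool \<times> 's) list) set)"
proof -
  have "set_pmf (traj M \<pi> t n x) \<subseteq> {xs. set xs \<subseteq> UNIV \<and> length xs = n}"
  proof
    fix s assume "s \<in> set_pmf (traj M \<pi> t n x)"
    then show "s \<in> {xs. set xs \<subseteq> UNIV \<and> length xs = n}" using traj_support[of s] by simp
  qed
  then show ?thesis by (rule finite_subset) (rule finite_lists_length_eq, simp)
qed


lemma integral_bind_pmf_fin:
  fixes f :: "'b \<Rightarrow> real"
  assumes fin: "finite (set_pmf (bind_pmf M N))"
  shows "(\<integral>y. f y \<partial>measure_pmf (bind_pmf M N)) = (\<integral>x. (\<integral>y. f y \<partial>measure_pmf (N x)) \<partial>measure_pmf M)"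
proof -
  let ?A = "set_pmf (bind_pmf M N)"
  define g where "g y = f y * indicator ?A y" for y
  define B where "B = (\<Sum>z\<in>?A. \<bar>f z\<bar>)"
  have B: "\<bar>g y\<bar> \<le> B" for y
  proof (cases "y \<in> ?A")
    case True
    then have "\<bar>f y\<bar> \<le> B" unfolding B_def by (intro member_le_sum fin) auto
    then show ?thesis using True by (simp add: g_def)
  next
    case False
    have "0 \<le> B" unfolding B_def by (intro sum_nonneg) auto
    then show ?thesis using False by (simp add: g_def)
  qed
  have 1: "(\<integral>y. f y \<partial>measure_pmf (bind_pmf M N)) = (\<integral>y. g y \<partial>measure_pmf (bind_pmf M N))"
    by (intro integral_cong_AE) (simp_all add: g_def AE_measure_pmf_iff)
  have 2: "(\<integral>y. g y \<partial>measure_pmf (bind_pmf M N)) = (\<integral>x. (\<integral>y. g y \<partial>measure_pmf (N x)) \<partial>measure_pmf M)"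
    unfolding measure_pmf_bind
    by (rule integral_bind[where K="count_space UNIV" and B=B and B'=1])
       (simp_all add: B measure_pmf.emeasure_space_1 measure_pmf.finite_measure measure_pmf_in_subprob_algebra)
  have 3: "(\<integral>x. (\<integral>y. g y \<partial>measure_pmf (N x)) \<partial>measure_pmf M) = (\<integral>x. (\<integral>y. f y \<partial>measure_pmf (N x)) \<partial>measure_pmf M)"
    by (intro integral_cong_AE) (auto simp: AE_measure_pmf_iff g_def split: split_indicator intro!: integral_cong_AE)
  show ?thesis using 1 2 3 by simp
qed

lemma traj_Suc_integral:
  fixes F :: "_ \<Rightarrow> real"
  shows "(\<integral>s. F s \<partial>measure_pmf (traj (M::('s::finite,'a::finite) mdp) \<pi> t (Suc n) x)) =
    (\<integral>y. (\<integral>s. F ((\<pi> t x, fst y, snd y) # s) \<partial>measure_pmf (traj M \<pi> (Suc t) n (snd y)))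
       \<partial>measure_pmf (trans M t x (\<pi> t x)))"
proof -
  have "(\<integral>s. F s \<partial>measure_pmf (traj M \<pi> t (Suc n) x)) =
    (\<integral>y. (\<integral>s. F s \<partial>measure_pmf ((\<lambda>(r, x'). map_pmf (\<lambda>rest. (\<pi> t x, r, x') # rest) (traj M \<pi> (Suc t) n x')) y))
       \<partial>measure_pmf (trans M t x (\<pi> t x)))"
    unfolding traj.simps
    by (rule integral_bind_pmf_fin) (simp only: traj.simps(2)[symmetric] fin_traj)
  also have "\<dots> = (\<integral>y. (\<integral>s. F ((\<pi> t x, fst y, snd y) # s) \<partial>measure_pmf (traj M \<pi> (Suc t) n (snd y)))
       \<partial>measure_pmf (trans M t x (\<pi> t x)))"
    by (simp add: split_beta)
  finally show ?thesis .
qed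

lemma integrable_traj[simp]:
  fixes F :: "_ \<Rightarrow> real"
  shows "integrable (measure_pmf (traj (M::('s::finite,'a::finite) mdp) \<pi> t n x)) F"
  by (rule integrable_measure_pmf_finite) (rule fin_traj)

lemma integrable_fin_type[simp]:
  fixes F :: "'b::finite \<Rightarrow> real"
  shows "integrable (measure_pmf p) F"
  by (rule integrable_measure_pmf_finite) simp

lemma vmax_zero[simp]: "vmax (\<lambda>_ _. 0) y = 0"
  by (simp add: vmax_def)

lemma tele:
  fixes Q :: "nat \<Rightarrow> ('s::finite, 'a::finite) qfun"
  assumes "\<And>y. vmax (Q (t+n)) y = 0"
  shows "vmax (Q t) x - (\<integral>s. (\<Sum>i<n. rew s i) \<partial>measure_pmf (traj M \<pi> t n x)) =
    (\<integral>s. (\<Sum>i<n. vmax (Q (t+i)) (stt x s i) - bellman M (t+i) (Q (Suc (t+i))) (stt x s i) (act s i))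
      \<partial>measure_pmf (traj M \<pi> t n x))"
  using assms
proof (induction n arbitrary: t x)
  case 0 then show ?case by simp
next
  case (Suc n)
  let ?T = "trans M t x (\<pi> t x)"
  define D where "D i y a = vmax (Q i) y - bellman M i (Q (Suc i)) y a" for i y a
  have IH: "vmax (Q (Suc t)) y - (\<integral>s. (\<Sum>i<n. rew s i) \<partial>measure_pmf (traj M \<pi> (Suc t) n y)) =
    (\<integral>s. (\<Sum>i<n. D (Suc t + i) (stt y s i) (act s i)) \<partial>measure_pmf (traj M \<pi> (Suc t) n y))" for y
    using Suc.IH[of "Suc t" y] Suc.prems by (simp add: D_def)
  have bell: "bellman M t (Q (Suc t)) x (\<pi> t x) = (\<integral>y. of_bool (fst y) + vmax (Q (Suc t)) (snd y) \<partial>measure_pmf ?T)"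
    unfolding bellman_def by (intro Bochner_Integration.integral_cong) (auto split: prod.splits)
  have L1: "(\<integral>s. (\<Sum>i<Suc n. rew ((\<pi> t x, fst y, snd y) # s) i) \<partial>measure_pmf (traj M \<pi> (Suc t) n (snd y)))
     = of_bool (fst y) + (\<integral>s. (\<Sum>i<n. rew s i) \<partial>measure_pmf (traj M \<pi> (Suc t) n (snd y)))" for y
    apply (simp only: sum.lessThan_Suc_shift rew_Cons_0 rew_Cons_Suc prod.sel)
    apply (subst Bochner_Integration.integral_add)
      apply simp
     apply simp
    apply simp
    done
  have L: "(\<integral>s. (\<Sum>i<Suc n. rew s i) \<partial>measure_pmf (traj M \<pi> t (Suc n) x)) =
     (\<integral>y. of_bool (fst y) + (\<integral>s. (\<Sum>i<n. rew s i) \<partial>measure_pmf (traj M \<pi> (Suc t) n (snd y))) \<partial>measure_pmf ?T)"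
    unfolding traj_Suc_integral L1 ..
  have R1: "(\<integral>s. (\<Sum>i<Suc n. D (t+i) (stt x ((\<pi> t x, fst y, snd y) # s) i) (act ((\<pi> t x, fst y, snd y) # s) i)) \<partial>measure_pmf (traj M \<pi> (Suc t) n (snd y)))
     = D t x (\<pi> t x) + (\<integral>s. (\<Sum>i<n. D (Suc t + i) (stt (snd y) s i) (act s i)) \<partial>measure_pmf (traj M \<pi> (Suc t) n (snd y)))" for y
    apply (simp only: sum.lessThan_Suc_shift stt_Cons_Suc act_Cons_Suc stt_0 act_Cons_0 prod.sel add_Suc_right add_Suc add_0_right)
    apply (subst Bochner_Integration.integral_add)
      apply simp
     apply simp
    apply simp
    done
  have "(\<integral>s. (\<Sum>i<Suc n. D (t+i) (stt x s i) (act s i)) \<partial>measure_pmf (traj M \<pi> t (Suc n) x)) =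
     (\<integral>y. D t x (\<pi> t x) + (vmax (Q (Suc t)) (snd y) - (\<integral>s. (\<Sum>i<n. rew s i) \<partial>measure_pmf (traj M \<pi> (Suc t) n (snd y)))) \<partial>measure_pmf ?T)"
    unfolding traj_Suc_integral R1 IH ..
  also have "\<dots> = vmax (Q t) x - (\<integral>y. of_bool (fst y) + (\<integral>s. (\<Sum>i<n. rew s i) \<partial>measure_pmf (traj M \<pi> (Suc t) n (snd y))) \<partial>measure_pmf ?T)"
    unfolding D_def bell by (simp add: integral_diff integral_add)
  finally show ?case using L by (simp add: D_def)
qed

lemma greedy_ex: fixes f :: "'a::finite \<Rightarrow> real" shows "\<exists>a. \<forall>b. f b \<le> f a"
proof -
  have "Max (range f) \<in> range f" by (rule Max_in) auto
  then obtain a where a: "f a = Max (range f)" by (metis rangeE)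
  have "\<forall>b. f b \<le> f a" unfolding a by (auto intro: Max_ge)
  then show ?thesis by blast
qed

lemma greedy_Min: fixes f :: "'a::{finite,linorder} \<Rightarrow> real"
  shows "greedy f = Min {a. \<forall>b. f b \<le> f a}"
  unfolding greedy_def by (rule Least_Min) (simp_all add: greedy_ex)

lemma greedy_ge: fixes f :: "'a::{finite,linorder} \<Rightarrow> real" shows "f b \<le> f (greedy f)"
proof -
  have "greedy f \<in> {a. \<forall>b. f b \<le> f a}" unfolding greedy_Min
    by (rule Min_in) (simp_all add: greedy_ex)
  then show ?thesis by simp
qed

lemma vmax_ge: "Q y a \<le> vmax (Q :: ('s, 'a::finite) qfun) y"
  unfolding vmax_def by (rule Max_ge) auto

lemma vmax_greedy: "vmax Q y = Q y (greedy (Q y))"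
  unfolding vmax_def by (rule Max_eqI) (auto intro: greedy_ge)

declare backward.simps[simp del]
lemma backward_ge[simp]: "H \<le> t \<Longrightarrow> backward H Op t = (\<lambda>_ _. 0)"
  by (simp add: backward.simps)
lemma backward_lt: "t < H \<Longrightarrow> backward H Op t = Op t (backward H Op (Suc t))"
  by (simp add: backward.simps)

lemma Vpi_alt: "Vpi M H \<pi> x = (\<integral>s. (\<Sum>i<H. rew s i) \<partial>measure_pmf (traj M \<pi> 0 H x))"
  by (simp add: Vpi_def rew_def)

lemma Qstar_gap:
  fixes M :: "('s::finite, 'a::{finite,linorder}) mdp"
  shows "vmax (Qstar M H 0) x - Vpi M H \<pi> x =
    (\<integral>s. (\<Sum>i<H. vmax (Qstar M H i) (stt x s i) - Qstar M H i (stt x s i) (act s i))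
      \<partial>measure_pmf (traj M \<pi> 0 H x))"
proof -
  have "vmax (Qstar M H 0) x - Vpi M H \<pi> x =
    (\<integral>s. (\<Sum>i<H. vmax (Qstar M H (0+i)) (stt x s i) - bellman M (0+i) (Qstar M H (Suc (0+i))) (stt x s i) (act s i))
      \<partial>measure_pmf (traj M \<pi> 0 H x))"
    unfolding Vpi_alt by (rule tele) (simp add: Qstar_def)
  also have "\<dots> = (\<integral>s. (\<Sum>i<H. vmax (Qstar M H i) (stt x s i) - Qstar M H i (stt x s i) (act s i))
      \<partial>measure_pmf (traj M \<pi> 0 H x))"
    by (intro Bochner_Integration.integral_cong refl sum.cong) (simp_all add: Qstar_def backward_lt)
  finally show ?thesis .
qed

lemma Vpi_le_Qstar:
  fixes M :: "('s::finite, 'a::{finite,linorder}) mdp"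
  shows "Vpi M H \<pi> x \<le> vmax (Qstar M H 0) x"
proof -
  have "0 \<le> (\<integral>s. (\<Sum>i<H. vmax (Qstar M H i) (stt x s i) - Qstar M H i (stt x s i) (act s i))
      \<partial>measure_pmf (traj M \<pi> 0 H x))"
    by (intro integral_nonneg_AE AE_I2 sum_nonneg) (simp add: vmax_ge)
  then show ?thesis using Qstar_gap[of M H x \<pi>] by simp
qed

lemma Vpi_greedy_Qstar:
  fixes M :: "('s::finite, 'a::{finite,linorder}) mdp"
  shows "Vpi M H (\<lambda>t y. greedy (Qstar M H t y)) x = vmax (Qstar M H 0) x"
proof -
  let ?p = "\<lambda>t y. greedy (Qstar M H t y)"
  have "(\<integral>s. (\<Sum>i<H. vmax (Qstar M H i) (stt x s i) - Qstar M H i (stt x s i) (act s i))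
      \<partial>measure_pmf (traj M ?p 0 H x)) = (\<integral>s. 0 \<partial>measure_pmf (traj M ?p 0 H x))"
  proof (intro integral_cong_AE)
    show "AE s in measure_pmf (traj M ?p 0 H x). (\<Sum>i<H. vmax (Qstar M H i) (stt x s i) - Qstar M H i (stt x s i) (act s i)) = 0"
      unfolding AE_measure_pmf_iff
    proof (intro ballI sum.neutral)
      fix s i assume s: "s \<in> set_pmf (traj M ?p 0 H x)" and i: "i \<in> {..<H}"
      then have "act s i = ?p i (stt x s i)" using traj_support[OF s] by simp
      then show "vmax (Qstar M H i) (stt x s i) - Qstar M H i (stt x s i) (act s i) = 0"
        by (simp add: vmax_greedy)
    qed
  qed simp_all
  then show ?thesis using Qstar_gap[of M H x ?p] by simp
qed

lemma Vstar_eq: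
  fixes M :: "('s::finite, 'a::{finite,linorder}) mdp"
  shows "Vstar M H x = vmax (Qstar M H 0) x"
  unfolding Vstar_def
  by (rule cSup_eq_maximum) (auto intro: Vpi_le_Qstar Vpi_greedy_Qstar[symmetric])

lemma Qrl_gap:
  fixes h :: "('s::finite, 'a::{finite,linorder}) episode list"
  shows "vmax (Qrl th v lam H h xi 0) x - Vpi M H (pol th v lam H h xi) x =
    (\<integral>s. (\<Sum>i<H. rlsvi_op th v lam h xi i (Qrl th v lam H h xi (Suc i)) (stt x s i) (act s i)
       - bellman M i (Qrl th v lam H h xi (Suc i)) (stt x s i) (act s i))
      \<partial>measure_pmf (traj M (pol th v lam H h xi) 0 H x))"
proof -
  let ?Q = "Qrl th v lam H h xi" and ?p = "pol th v lam H h xi"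
  have "vmax (?Q 0) x - Vpi M H ?p x =
    (\<integral>s. (\<Sum>i<H. vmax (?Q (0+i)) (stt x s i) - bellman M (0+i) (?Q (Suc (0+i))) (stt x s i) (act s i))
      \<partial>measure_pmf (traj M ?p 0 H x))"
    unfolding Vpi_alt by (rule tele) (simp add: Qrl_def)
  also have "\<dots> = (\<integral>s. (\<Sum>i<H. rlsvi_op th v lam h xi i (?Q (Suc i)) (stt x s i) (act s i)
       - bellman M i (?Q (Suc i)) (stt x s i) (act s i))
      \<partial>measure_pmf (traj M ?p 0 H x))"
  proof (intro integral_cong_AE)
    show "AE s in measure_pmf (traj M ?p 0 H x). (\<Sum>i<H. vmax (?Q (0+i)) (stt x s i) - bellman M (0+i) (?Q (Suc (0+i))) (stt x s i) (act s i)) =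
       (\<Sum>i<H. rlsvi_op th v lam h xi i (?Q (Suc i)) (stt x s i) (act s i)
       - bellman M i (?Q (Suc i)) (stt x s i) (act s i))"
      unfolding AE_measure_pmf_iff
    proof (intro ballI sum.cong refl)
      fix s i assume s: "s \<in> set_pmf (traj M ?p 0 H x)" and i: "i \<in> {..<H}"
      then have "act s i = ?p i (stt x s i)" using traj_support[OF s] by simp
      then have "vmax (?Q i) (stt x s i) = ?Q i (stt x s i) (act s i)"
        by (simp add: vmax_greedy pol_def)
      also have "\<dots> = rlsvi_op th v lam h xi i (?Q (Suc i)) (stt x s i) (act s i)"
        using i by (simp add: Qrl_def backward_lt)
      finally show "vmax (?Q (0+i)) (stt x s i) - bellman M (0+i) (?Q (Suc (0+i))) (stt x s i) (act s i) =
         rlsvi_op th v lam h xi i (?Q (Suc i)) (stt x s i) (act s i) - bellman M i (?Q (Suc i)) (stt x s i) (act s i)"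
        by simp
    qed
  qed simp_all
  finally show ?thesis .
qed


lemma fin_episode: "finite (set_pmf (episode_pmf (M::('s::finite,'a::finite) mdp) H \<pi>))"
  unfolding episode_pmf_def by (simp add: fin_traj)

lemma episode_integral:
  fixes F :: "_ \<Rightarrow> real"
  shows "(\<integral>e. F e \<partial>measure_pmf (episode_pmf (M::('s::finite,'a::finite) mdp) H \<pi>)) =
     (\<integral>x0. (\<integral>s. F (x0, s) \<partial>measure_pmf (traj M \<pi> 0 H x0)) \<partial>measure_pmf (init M))"
proof -
  have "(\<integral>e. F e \<partial>measure_pmf (episode_pmf M H \<pi>)) =
     (\<integral>x0. (\<integral>e. F e \<partial>measure_pmf (map_pmf (\<lambda>s. (x0, s)) (traj M \<pi> 0 H x0))) \<partial>measure_pmf (init M))"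
    unfolding episode_pmf_def by (rule integral_bind_pmf_fin) (simp add: fin_traj)
  then show ?thesis by simp
qed

lemma ep_state_stt[simp]: "ep_state (x0, s) t = stt x0 s t"
  by (cases t) (simp_all add: stt_def)

lemma ep_action_act[simp]: "ep_action (x0, s) t = act s t"
  by (simp add: ep_action_def act_def)

lemma pointwise:
  fixes M :: "('s::finite, 'a::{finite,linorder}) mdp" and H :: nat and th v lam h xi
  defines "E \<equiv> \<lambda>f. (\<integral>e. f e \<partial>measure_pmf (episode_pmf M H (pol th v lam H h xi)))"
  shows "E (\<lambda>e. Vstar M H (fst e) - Vpi M H (pol th v lam H h xi) (fst e)) =
     E (\<lambda>e. vmax (Qstar M H 0) (fst e)) - E (\<lambda>e. vmax (Qrl th v lam H h xi 0) (fst e))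
     + E (\<lambda>e. \<Sum>t<H.
              rlsvi_op th v lam h xi t (Qrl th v lam H h xi (Suc t)) (ep_state e t) (ep_action e t)
              - bellman M t (Qrl th v lam H h xi (Suc t)) (ep_state e t) (ep_action e t))"
proof -
  let ?p = "pol th v lam H h xi" and ?Q = "Qrl th v lam H h xi"
  have E4: "E (\<lambda>e. \<Sum>t<H.
              rlsvi_op th v lam h xi t (?Q (Suc t)) (ep_state e t) (ep_action e t)
              - bellman M t (?Q (Suc t)) (ep_state e t) (ep_action e t)) =
     (\<integral>x0. vmax (?Q 0) x0 - Vpi M H ?p x0 \<partial>measure_pmf (init M))"
    unfolding E_def episode_integral ep_state_stt ep_action_act Qrl_gap ..
  have E1: "E (\<lambda>e. Vstar M H (fst e) - Vpi M H ?p (fst e)) =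
     (\<integral>x0. vmax (Qstar M H 0) x0 - Vpi M H ?p x0 \<partial>measure_pmf (init M))"
    unfolding E_def episode_integral by (simp add: Vstar_eq)
  have E2: "E (\<lambda>e. vmax (?Q 0) (fst e)) = (\<integral>x0. vmax (?Q 0) x0 \<partial>measure_pmf (init M))"
    unfolding E_def episode_integral by simp
  have E3: "E (\<lambda>e. vmax (Qstar M H 0) (fst e)) = (\<integral>x0. vmax (Qstar M H 0) x0 \<partial>measure_pmf (init M))"
    unfolding E_def episode_integral by simp
  show ?thesis unfolding E1 E2 E3 E4 by (simp add: integral_diff)
qed


lemma sets_std_normal[measurable_cong]: "sets std_normal_distribution = sets borel"
  by simp

lemma noise_comp[measurable]:
  "k \<in> {..<H} \<times> UNIV \<Longrightarrow> (\<lambda>xi. xi k) \<in> borel_measurable (noiseM H)"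
  unfolding noiseM_def by measurable

lemma noise_comp':
  "t < H \<Longrightarrow> (\<lambda>xi. xi (t, y, a)) \<in> borel_measurable (noiseM H)"
  by (rule noise_comp) simp

lemma borel_measurable_sum_list_map:
  fixes f :: "'b \<Rightarrow> 'c \<Rightarrow> real"
  shows "(\<And>x. x \<in> set xs \<Longrightarrow> (\<lambda>\<omega>. f x \<omega>) \<in> borel_measurable M) \<Longrightarrow>
    (\<lambda>\<omega>. sum_list (map (\<lambda>x. f x \<omega>) xs)) \<in> borel_measurable M"
  by (induction xs) auto

lemma Qrl_meas:
  fixes h :: "('s::finite, 'a::{finite,linorder}) episode list"
  shows "(\<lambda>xi. Qrl th v lam H h xi t y a) \<in> borel_measurable (noiseM H)"
proof (cases "H \<le> t")
  case True then show ?thesis by (simp add: Qrl_def)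
next
  case False
  then have "t \<le> H" by simp
  then have "\<forall>y a. (\<lambda>xi. Qrl th v lam H h xi t y a) \<in> borel_measurable (noiseM H)"
  proof (induction t rule: inc_induct)
    case base then show ?case by (simp add: Qrl_def)
  next
    case (step n)
    have vm: "(\<lambda>xi. vmax (Qrl th v lam H h xi (Suc n)) y') \<in> borel_measurable (noiseM H)" for y'
      unfolding vmax_def by (rule borel_measurable_Max) (simp_all add: step.IH)
    show ?case
    proof (intro allI)
      fix y a
      have "(\<lambda>xi. rlsvi_op th v lam h xi n (Qrl th v lam H h xi (Suc n)) y a) \<in> borel_measurable (noiseM H)"
        unfolding rlsvi_op_def
        by (intro borel_measurable_add borel_measurable_times borel_measurable_const
              borel_measurable_sum_list_map noise_comp' vm step.hyps)
      then show "(\<lambda>xi. Qrl th v lam H h xi n y a) \<in> borel_measurable (noiseM H)"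
        using step.hyps by (simp add: Qrl_def backward_lt)
    qed
  qed
  then show ?thesis by blast
qed

declare Qrl_meas[measurable]

lemma pol_iff:
  fixes h :: "('s::finite, 'a::{finite,linorder}) episode list"
  shows "pol th v lam H h xi t y = a \<longleftrightarrow>
    (\<forall>b. Qrl th v lam H h xi t y b \<le> Qrl th v lam H h xi t y a) \<and>
    (\<forall>c. (\<forall>b. Qrl th v lam H h xi t y b \<le> Qrl th v lam H h xi t y c) \<longrightarrow> a \<le> c)"
  unfolding pol_def greedy_Min
  by (subst Min_eq_iff) (auto simp: greedy_ex)

lemma pred_le_real:
  fixes f g :: "_ \<Rightarrow> real"
  shows "f \<in> borel_measurable M \<Longrightarrow> g \<in> borel_measurable M \<Longrightarrow> Measurable.pred M (\<lambda>x. f x \<le> g x)"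
  unfolding pred_def by (rule borel_measurable_le)

lemma pred_const': "Measurable.pred M (\<lambda>x. P)"
  unfolding pred_def by (cases P) auto

lemma pol_pred:
  fixes h :: "('s::finite, 'a::{finite,linorder}) episode list"
  shows "Measurable.pred (noiseM H) (\<lambda>xi. pol th v lam H h xi t y = a)"
  unfolding pol_iff
  by (intro pred_intros_logic(3,4) pred_intros_countable(1) pred_le_real Qrl_meas pred_const')

definition tab :: "nat \<Rightarrow> (nat \<Rightarrow> 's \<Rightarrow> 'a) \<Rightarrow> (nat \<Rightarrow> 's \<Rightarrow> 'a)" where
  "tab H \<pi> = restrict \<pi> {..<H}"

lemma traj_cong:
  "(\<And>i. t \<le> i \<Longrightarrow> i < t + n \<Longrightarrow> \<pi> i = \<pi>' i) \<Longrightarrow> traj M \<pi> t n x = traj M \<pi>' t n x"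
proof (induction n arbitrary: t x)
  case 0 then show ?case by simp
next
  case (Suc n)
  have 1: "\<pi> t = \<pi>' t" by (rule Suc.prems) simp_all
  have 2: "traj M \<pi> (Suc t) n x' = traj M \<pi>' (Suc t) n x'" for x'
    by (rule Suc.IH) (rule Suc.prems; simp)
  show ?case by (simp add: 1 2)
qed

lemma ep_tab: "episode_pmf M H (tab H \<pi>) = episode_pmf M H \<pi>"
  unfolding episode_pmf_def tab_def
  by (intro arg_cong[where f="bind_pmf (init M)"] ext arg_cong[where f="map_pmf _"] traj_cong) simp

abbreviation TS :: "nat \<Rightarrow> (nat \<Rightarrow> 's \<Rightarrow> 'a) set" where
  "TS H \<equiv> PiE {..<H} (\<lambda>_. UNIV)"

lemma tab_in: "tab H \<pi> \<in> TS H"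
  by (simp add: tab_def)

lemma finite_TS: "finite (TS H :: (nat \<Rightarrow> 's::finite \<Rightarrow> 'a::finite) set)"
  by (rule finite_PiE) simp_all

lemma tab_meas:
  fixes h :: "('s::finite, 'a::{finite,linorder}) episode list"
  shows "(\<lambda>xi. tab H (pol th v lam H h xi)) \<in> measurable (noiseM H) (count_space (TS H))"
proof (subst measurable_count_space_eq2[OF finite_TS], intro conjI ballI)
  show "(\<lambda>xi. tab H (pol th v lam H h xi)) \<in> space (noiseM H) \<rightarrow> TS H"
    using tab_in by blast
  fix \<tau> :: "nat \<Rightarrow> 's \<Rightarrow> 'a" assume \<tau>: "\<tau> \<in> TS H"
  have "(\<lambda>xi. tab H (pol th v lam H h xi)) -` {\<tau>} \<inter> space (noiseM H) =
     {xi \<in> space (noiseM H). \<forall>t\<in>{..<H}. \<forall>y. pol th v lam H h xi t y = \<tau> t y}"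
  proof (intro set_eqI iffI)
    fix xi assume "xi \<in> (\<lambda>xi. tab H (pol th v lam H h xi)) -` {\<tau>} \<inter> space (noiseM H)"
    then show "xi \<in> {xi \<in> space (noiseM H). \<forall>t\<in>{..<H}. \<forall>y. pol th v lam H h xi t y = \<tau> t y}"
      by (auto simp: tab_def)
  next
    fix xi assume xi: "xi \<in> {xi \<in> space (noiseM H). \<forall>t\<in>{..<H}. \<forall>y. pol th v lam H h xi t y = \<tau> t y}"
    have "tab H (pol th v lam H h xi) = \<tau>"
    proof (rule ext)
      fix t show "tab H (pol th v lam H h xi) t = \<tau> t"
        using xi \<tau> by (cases "t < H") (auto simp: tab_def PiE_def extensional_def)
    qed
    then show "xi \<in> (\<lambda>xi. tab H (pol th v lam H h xi)) -` {\<tau>} \<inter> space (noiseM H)"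
      using xi by simp
  qed
  also have "\<dots> \<in> sets (noiseM H)"
    using pol_pred by measurable
  finally show "(\<lambda>xi. tab H (pol th v lam H h xi)) -` {\<tau>} \<inter> space (noiseM H) \<in> sets (noiseM H)" .
qed


lemma pmf_bind_fin:
  fixes p :: "'b::finite pmf"
  shows "pmf (bind_pmf p f) e = (\<Sum>y\<in>UNIV. pmf p y * pmf (f y) e)"
  unfolding pmf_bind by (subst integral_measure_pmf_real[where A=UNIV]) (simp_all add: mult.commute)

lemma pmf_map_Cons:
  "pmf (map_pmf (Cons c) q) s = (case s of [] \<Rightarrow> 0 | c' # s' \<Rightarrow> if c' = c then pmf q s' else 0)"
proof (cases s)
  case Nil then show ?thesis by (auto simp: pmf_eq_0_set_pmf)
next
  case (Cons c' s')
  show ?thesis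
  proof (cases "c' = c")
    case True then show ?thesis using Cons by (simp add: pmf_map_inj')
  next
    case False then show ?thesis using Cons by (auto simp: pmf_eq_0_set_pmf)
  qed
qed

lemma pmf_map_Pair:
  "pmf (map_pmf (Pair x0) q) e = (if fst e = x0 then pmf q (snd e) else 0)"
proof (cases "fst e = x0")
  case True
  then have "e = Pair x0 (snd e)" by (cases e) simp
  have inj: "inj (Pair x0)" by (simp add: inj_def)
  from pmf_map_inj'[OF inj, of q "snd e"] \<open>e = Pair x0 (snd e)\<close> True show ?thesis by simp
next
  case False then show ?thesis by (auto simp: pmf_eq_0_set_pmf)
qed

lemma traj_pmf_meas:
  fixes \<pi> :: "nat \<Rightarrow> 's::finite \<Rightarrow> 'a::finite"
  assumes A3: "\<And>t x a y. (\<lambda>M. pmf (trans M t x a) y) \<in> borel_measurable P"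
  shows "(\<lambda>M. pmf (traj M \<pi> t n x) s) \<in> borel_measurable P"
proof (induction n arbitrary: t x s)
  case 0 then show ?case by simp
next
  case (Suc n)
  have eq: "pmf (traj M \<pi> t (Suc n) x) s =
     (\<Sum>y\<in>UNIV. pmf (trans M t x (\<pi> t x)) y *
        (case s of [] \<Rightarrow> 0 | c' # s' \<Rightarrow> if c' = (\<pi> t x, y) then pmf (traj M \<pi> (Suc t) n (snd y)) s' else 0))" for M
    by (simp only: traj.simps pmf_bind_fin) (simp add: split_beta pmf_map_Cons)
  show ?case unfolding eq
    apply (intro borel_measurable_sum borel_measurable_times A3)
    subgoal for y
      apply (cases s)
       apply simp
      subgoal for c' s'
        by (cases "c' = (\<pi> t x, y)") (simp_all add: Suc.IH)
      done
    done
qed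

lemma ep_pmf_meas:
  fixes \<pi> :: "nat \<Rightarrow> 's::finite \<Rightarrow> 'a::finite"
  assumes A2: "\<And>x. (\<lambda>M. pmf (init M) x) \<in> borel_measurable P"
  assumes A3: "\<And>t x a y. (\<lambda>M. pmf (trans M t x a) y) \<in> borel_measurable P"
  shows "(\<lambda>M. pmf (episode_pmf M H \<pi>) e) \<in> borel_measurable P"
proof -
  have eq: "pmf (episode_pmf M H \<pi>) e =
     (\<Sum>x0\<in>UNIV. pmf (init M) x0 * (if fst e = x0 then pmf (traj M \<pi> 0 H x0) (snd e) else 0))" for M
    unfolding episode_pmf_def pmf_bind_fin pmf_map_Pair ..
  show ?thesis unfolding eq
    apply (intro borel_measurable_sum borel_measurable_times A2)
    subgoal for x0 by (cases "fst e = x0") (simp_all add: traj_pmf_meas[OF A3])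
    done
qed

lemma countable_TS: "countable (TS H :: (nat \<Rightarrow> 's::finite \<Rightarrow> 'a::finite) set)"
  using finite_TS by (rule countable_finite)

lemma ep_pmf_joint:
  fixes h :: "('s::finite, 'a::{finite,linorder}) episode list"
  assumes A2: "\<And>x. (\<lambda>M. pmf (init M) x) \<in> borel_measurable P"
  assumes A3: "\<And>t x a y. (\<lambda>M. pmf (trans M t x a) y) \<in> borel_measurable P"
  shows "(\<lambda>p. pmf (episode_pmf (fst p) H (pol th v lam H h (snd p))) e) \<in> borel_measurable (P \<Otimes>\<^sub>M noiseM H)"
proof -
  have "(\<lambda>p. pmf (episode_pmf (fst p) H (tab H (pol th v lam H h (snd p)))) e) \<in> borel_measurable (P \<Otimes>\<^sub>M noiseM H)"
  proof (rule measurable_compose_countable'[where f="\<lambda>\<tau> p. pmf (episode_pmf (fst p) H \<tau>) e" and I="TS H"])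
    show "(\<lambda>p. pmf (episode_pmf (fst p) H \<tau>) e) \<in> borel_measurable (P \<Otimes>\<^sub>M noiseM H)" for \<tau>
      by (rule measurable_compose[OF measurable_fst ep_pmf_meas[OF A2 A3]])
    show "(\<lambda>p. tab H (pol th v lam H h (snd p))) \<in> measurable (P \<Otimes>\<^sub>M noiseM H) (count_space (TS H))"
      by (rule measurable_compose[OF measurable_snd tab_meas])
    show "countable (TS H :: (nat \<Rightarrow> 's \<Rightarrow> 'a) set)" by (rule countable_TS)
  qed
  then show ?thesis by (simp add: ep_tab)
qed

lemma bellman_repr:
  fixes M :: "('s::finite, 'a::finite) mdp"
  shows "bellman M t Q y a = (\<Sum>z\<in>UNIV. pmf (trans M t y a) z * (of_bool (fst z) + vmax Q (snd z)))"
  unfolding bellman_def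
  by (subst integral_measure_pmf_real[where A=UNIV]) (simp_all add: split_beta mult.commute)

lemma Qstar_meas:
  assumes A3: "\<And>t x a y. (\<lambda>M. pmf (trans M t x a) y) \<in> borel_measurable P"
  shows "(\<lambda>M. Qstar (M::('s::finite, 'a::finite) mdp) H t y a) \<in> borel_measurable P"
proof (cases "H \<le> t")
  case True then show ?thesis by (simp add: Qstar_def)
next
  case False
  then have "t \<le> H" by simp
  then have "\<forall>y a. (\<lambda>M. Qstar (M::('s, 'a) mdp) H t y a) \<in> borel_measurable P"
  proof (induction t rule: inc_induct)
    case base then show ?case by (simp add: Qstar_def)
  next
    case (step n)
    have vm: "(\<lambda>M. vmax (Qstar (M::('s, 'a) mdp) H (Suc n)) y') \<in> borel_measurable P" for y'
      unfolding vmax_def by (rule borel_measurable_Max) (simp_all add: step.IH)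
    have eq: "Qstar M H n y a = bellman M n (Qstar M H (Suc n)) y a" for M :: "('s, 'a) mdp" and y a
      unfolding Qstar_def using step.hyps by (simp add: backward_lt)
    show ?case unfolding eq bellman_repr
      by (intro allI borel_measurable_sum borel_measurable_times borel_measurable_add borel_measurable_const A3 vm)
  qed
  then show ?thesis by blast
qed

lemma vmax_Qrl_meas:
  fixes h :: "('s::finite, 'a::{finite,linorder}) episode list"
  shows "(\<lambda>xi. vmax (Qrl th v lam H h xi t) y) \<in> borel_measurable (noiseM H)"
  unfolding vmax_def by (rule borel_measurable_Max) simp_all

lemma bellman_Qrl_joint:
  fixes h :: "('s::finite, 'a::{finite,linorder}) episode list"
  assumes A3: "\<And>t x a y. (\<lambda>M. pmf (trans M t x a) y) \<in> borel_measurable P"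
  shows "(\<lambda>p. bellman (fst p) t (Qrl th v lam H h (snd p) t') y a) \<in> borel_measurable (P \<Otimes>\<^sub>M noiseM H)"
  unfolding bellman_repr
  by (intro borel_measurable_sum borel_measurable_times borel_measurable_add borel_measurable_const
       measurable_compose[OF measurable_fst A3] measurable_compose[OF measurable_snd vmax_Qrl_meas])


lemma prob_std_normal: "prob_space std_normal_distribution"
  using real_dist_normal_dist by (simp add: real_distribution_def)

lemma prob_noise: "prob_space (noiseM H)"
  unfolding noiseM_def by (rule prob_space_PiM) (simp add: prob_std_normal)

lemma noise_space_prob: "noiseM H \<in> space (prob_algebra (noiseM H))"
  by (simp add: space_prob_algebra prob_noise)

lemma K2_eq: "measure_pmf p \<bind> (\<lambda>e. return (count_space UNIV) (h @ [e])) = measure_pmf (map_pmf (\<lambda>e. h @ [e]) p)"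
  by (simp add: bind_return_distr' map_pmf_rep_eq)

lemma pmf_in_prob_algebra: "measure_pmf p \<in> space (prob_algebra (count_space UNIV))"
  by (simp add: space_prob_algebra prob_space_measure_pmf)

lemma K2_meas:
  fixes h :: "('s::finite, 'a::{finite,linorder}) episode list"
  shows "(\<lambda>xi. measure_pmf (map_pmf (\<lambda>e. h @ [e]) (episode_pmf M H (pol th v lam H h xi))))
     \<in> noiseM H \<rightarrow>\<^sub>M prob_algebra (count_space UNIV)"
proof -
  have "(\<lambda>xi. measure_pmf (map_pmf (\<lambda>e. h @ [e]) (episode_pmf M H (tab H (pol th v lam H h xi)))))
     \<in> noiseM H \<rightarrow>\<^sub>M prob_algebra (count_space UNIV)"
    by (rule measurable_compose[OF tab_meas]) (simp add: pmf_in_prob_algebra)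
  then show ?thesis by (simp add: ep_tab)
qed

lemma K1_space:
  fixes h :: "('s::finite, 'a::{finite,linorder}) episode list"
  shows "noiseM H \<bind> (\<lambda>xi. measure_pmf (episode_pmf M H (pol th v lam H h xi)) \<bind> (\<lambda>e. return (count_space UNIV) (h @ [e])))
    \<in> space (prob_algebra (count_space UNIV))"
  unfolding K2_eq space_prob_algebra
  using prob_space_bind'[OF noise_space_prob K2_meas] sets_bind'[OF noise_space_prob K2_meas]
  by blast

lemmas K1_space' = K1_space[unfolded K2_eq]

lemma histM_space: "histM th v lam H M k \<in> space (prob_algebra (count_space UNIV))"
proof (induction k)
  case 0 then show ?case by (simp add: space_prob_algebra prob_space_return)
next
  case (Suc k)
  have K1: "(\<lambda>h. noiseM H \<bind> (\<lambda>xi. measure_pmf (episode_pmf M H (pol th v lam H h xi)) \<bind> (\<lambda>e. return (count_space UNIV) (h @ [e]))))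
     \<in> count_space UNIV \<rightarrow>\<^sub>M prob_algebra (count_space UNIV)"
    by (simp, intro Pi_I K1_space)
  show ?case unfolding histM.simps space_prob_algebra
    using prob_space_bind'[OF Suc.IH K1] sets_bind'[OF Suc.IH K1] by blast
qed

lemma histM_prob: "prob_space (histM th v lam H M k)"
  using histM_space[of th v lam H M k] by (simp add: space_prob_algebra)

lemma histM_sets: "sets (histM th v lam H M k) = sets (count_space UNIV)"
  using histM_space[of th v lam H M k] by (simp add: space_prob_algebra)

lemma histM_Suc_integral:
  fixes g :: "('s::finite, 'a::{finite,linorder}) episode list \<Rightarrow> real"
  assumes B: "\<And>h. \<bar>g h\<bar> \<le> B"
  shows "(\<integral>h. g h \<partial>histM th v lam H M (Suc k)) =
    (\<integral>h. (\<integral>xi. (\<integral>e. g (h @ [e]) \<partial>measure_pmf (episode_pmf M H (pol th v lam H h xi))) \<partial>noiseM H) \<partial>histM th v lam H M k)"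
proof -
  let ?K1 = "\<lambda>h. noiseM H \<bind> (\<lambda>xi. measure_pmf (map_pmf (\<lambda>e. h @ [e]) (episode_pmf M H (pol th v lam H h xi))))"
  have K1: "?K1 \<in> histM th v lam H M k \<rightarrow>\<^sub>M prob_algebra (count_space UNIV)"
    unfolding measurable_cong_sets[OF histM_sets refl]
    by (simp, intro Pi_I K1_space')
  have "(\<integral>h. g h \<partial>histM th v lam H M (Suc k)) = (\<integral>h. g h \<partial>(histM th v lam H M k \<bind> ?K1))"
    by (simp add: K2_eq)
  also have "\<dots> = (\<integral>h. (\<integral>h'. g h' \<partial>?K1 h) \<partial>histM th v lam H M k)"
  proof (rule integral_bind[where K="count_space UNIV" and B=B and B'=1])
    show "?K1 \<in> histM th v lam H M k \<rightarrow>\<^sub>M subprob_algebra (count_space UNIV)"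
      by (rule measurable_prob_algebraD[OF K1])
    show "finite_measure (histM th v lam H M k)" by (rule prob_space.finite_measure[OF histM_prob])
    show "AE x in histM th v lam H M k. emeasure (?K1 x) (space (?K1 x)) \<le> ennreal 1"
    proof (rule AE_I2)
      fix h
      have "prob_space (?K1 h)" using K1_space'[where h=h and M=M and H=H and th=th and v=v and lam=lam]
        by (simp add: space_prob_algebra)
      then show "emeasure (?K1 h) (space (?K1 h)) \<le> ennreal 1" by (simp add: prob_space.emeasure_space_1)
    qed
  qed (simp_all add: B)
  also have "\<dots> = (\<integral>h. (\<integral>xi. (\<integral>e. g (h @ [e]) \<partial>measure_pmf (episode_pmf M H (pol th v lam H h xi))) \<partial>noiseM H) \<partial>histM th v lam H M k)"
  proof (rule Bochner_Integration.integral_cong[OF refl])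
    fix h
    have "(\<integral>h'. g h' \<partial>?K1 h) = (\<integral>xi. (\<integral>h'. g h' \<partial>measure_pmf (map_pmf (\<lambda>e. h @ [e]) (episode_pmf M H (pol th v lam H h xi)))) \<partial>noiseM H)"
    proof (rule integral_bind[where K="count_space UNIV" and B=B and B'=1])
      show "(\<lambda>xi. measure_pmf (map_pmf (\<lambda>e. h @ [e]) (episode_pmf M H (pol th v lam H h xi)))) \<in> noiseM H \<rightarrow>\<^sub>M subprob_algebra (count_space UNIV)"
        by (rule measurable_prob_algebraD[OF K2_meas])
      show "finite_measure (noiseM H)" by (rule prob_space.finite_measure[OF prob_noise])
    qed (simp_all add: B measure_pmf.emeasure_space_1)
    then show "(\<integral>h'. g h' \<partial>?K1 h) = (\<integral>xi. (\<integral>e. g (h @ [e]) \<partial>measure_pmf (episode_pmf M H (pol th v lam H h xi))) \<partial>noiseM H)"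
      by simp
  qed
  finally show ?thesis .
qed


lemma sig2_pos: assumes "lam > 0" "v > 0" shows "0 < sig2 lam v n"
  using assms unfolding sig2_def by (simp add: add_pos_nonneg)

lemma sig2_le: assumes "lam > 0" "v > 0" shows "sig2 lam v n \<le> lam"
proof -
  have d: "1 / lam \<le> 1 / lam + real n / v" using assms by simp
  have "0 < 1 / lam" using assms by simp
  then have "inverse (1 / lam + real n / v) \<le> inverse (1 / lam)"
    using d by (intro le_imp_inverse_le) simp_all
  then show ?thesis by (simp add: sig2_def)
qed

lemma sig2_bound:
  assumes lam: "lam > 0" and v: "v > 0" and L: "\<bar>L\<bar> \<le> real n * K" and K: "0 \<le> K"
  shows "\<bar>sig2 lam v n * (T / lam + (1 / v) * L)\<bar> \<le> \<bar>T\<bar> + K"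
proof -
  define d where "d = 1 / lam + real n / v"
  have dpos: "0 < d" using lam v unfolding d_def by (simp add: add_pos_nonneg)
  have s: "sig2 lam v n = 1 / d" by (simp add: sig2_def d_def inverse_eq_divide)
  have "\<bar>T / lam + (1 / v) * L\<bar> \<le> \<bar>T\<bar> / lam + (1 / v) * (real n * K)"
  proof -
    have "\<bar>T / lam + (1 / v) * L\<bar> \<le> \<bar>T / lam\<bar> + \<bar>(1 / v) * L\<bar>" by (rule abs_triangle_ineq)
    also have "\<bar>T / lam\<bar> = \<bar>T\<bar> / lam" using lam by simp
    also have "\<bar>(1 / v) * L\<bar> = (1 / v) * \<bar>L\<bar>" using v by (simp add: abs_mult)
    also have "(1 / v) * \<bar>L\<bar> \<le> (1 / v) * (real n * K)" using L v by (intro mult_left_mono) simp_all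
    finally show ?thesis by simp
  qed
  also have "\<dots> \<le> (\<bar>T\<bar> + K) * d"
  proof -
    have "(\<bar>T\<bar> + K) * d = \<bar>T\<bar> / lam + (1 / v) * (real n * K) + (\<bar>T\<bar> * (real n / v) + K / lam)"
      using lam v by (simp add: d_def field_simps)
    moreover have "0 \<le> \<bar>T\<bar> * (real n / v) + K / lam" using K lam v by simp
    ultimately show ?thesis by linarith
  qed
  finally have "\<bar>T / lam + (1 / v) * L\<bar> / d \<le> \<bar>T\<bar> + K"
    using dpos by (simp add: divide_le_eq)
  then show ?thesis using dpos by (simp add: s abs_mult)
qed

lemma sum_list_bound:
  fixes f :: "'b \<Rightarrow> real"
  assumes "\<And>x. \<bar>f x\<bar> \<le> K"
  shows "\<bar>sum_list (map f xs)\<bar> \<le> real (length xs) * K"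
proof (induction xs)
  case Nil then show ?case by simp
next
  case (Cons x xs)
  have "\<bar>sum_list (map f (x # xs))\<bar> \<le> \<bar>f x\<bar> + \<bar>sum_list (map f xs)\<bar>" by (simp add: abs_triangle_ineq)
  also have "\<dots> \<le> K + real (length xs) * K" using assms Cons.IH by (intro add_mono) auto
  finally show ?case by (simp add: algebra_simps)
qed

lemma vmax_bound:
  fixes Q :: "('s, 'a::{finite,linorder}) qfun"
  assumes "\<And>a. \<bar>Q y a\<bar> \<le> K"
  shows "\<bar>vmax Q y\<bar> \<le> K"
  using assms by (simp add: vmax_greedy)

lemma bellman_bound:
  fixes M :: "('s::finite, 'a::{finite,linorder}) mdp"
  assumes "\<And>y a. \<bar>Q y a\<bar> \<le> K"
  shows "\<bar>bellman M t Q y a\<bar> \<le> 1 + K"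
proof -
  let ?p = "trans M t y a"
  have "\<bar>bellman M t Q y a\<bar> \<le> (\<Sum>z\<in>UNIV. \<bar>pmf ?p z * (of_bool (fst z) + vmax Q (snd z))\<bar>)"
    unfolding bellman_repr by (rule sum_abs)
  also have "\<dots> \<le> (\<Sum>z\<in>UNIV. pmf ?p z * (1 + K))"
  proof (intro sum_mono)
    fix z
    have "\<bar>of_bool (fst z) + vmax Q (snd z)\<bar> \<le> 1 + K"
    proof -
      have "\<bar>of_bool (fst z) + vmax Q (snd z)\<bar> \<le> \<bar>of_bool (fst z) :: real\<bar> + \<bar>vmax Q (snd z)\<bar>"
        by (rule abs_triangle_ineq)
      also have "\<dots> \<le> 1 + K" using vmax_bound[of Q "snd z" K] assms by (intro add_mono) auto
      finally show ?thesis .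
    qed
    then show "\<bar>pmf ?p z * (of_bool (fst z) + vmax Q (snd z))\<bar> \<le> pmf ?p z * (1 + K)"
      by (simp add: abs_mult mult_left_mono)
  qed
  also have "\<dots> = 1 + K"
    by (simp add: sum_distrib_right[symmetric] sum_pmf_eq_1)
  finally show ?thesis .
qed

lemma Qstar_bound:
  fixes M :: "('s::finite, 'a::{finite,linorder}) mdp"
  shows "\<bar>Qstar M H t y a\<bar> \<le> real H"
proof -
  have "\<forall>y a. \<bar>Qstar M H t y a\<bar> \<le> real (H - t)"
  proof (cases "H \<le> t")
    case True then show ?thesis by (simp add: Qstar_def)
  next
    case False then have "t \<le> H" by simp
    then show ?thesis
    proof (induction t rule: inc_induct)
      case base then show ?case by (simp add: Qstar_def)
    next
      case (step n)
      show ?case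
      proof (intro allI)
        fix y a
        have eq: "Qstar M H n y a = bellman M n (Qstar M H (Suc n)) y a"
          unfolding Qstar_def using step.hyps by (simp add: backward_lt)
        have "\<bar>bellman M n (Qstar M H (Suc n)) y a\<bar> \<le> 1 + real (H - Suc n)"
          by (rule bellman_bound) (use step.IH in blast)
        also have "\<dots> = real (H - n)" using step.hyps by simp
        finally show "\<bar>Qstar M H n y a\<bar> \<le> real (H - n)" unfolding eq .
      qed
    qed
  qed
  then show ?thesis by (meson diff_le_self of_nat_le_iff order_trans)
qed

definition Sx :: "nat \<Rightarrow> (nat \<times> 's::finite \<times> 'a::finite \<Rightarrow> real) \<Rightarrow> real" where
  "Sx H xi = (\<Sum>k\<in>{..<H} \<times> UNIV. \<bar>xi k\<bar>)"

definition Thb :: "nat \<Rightarrow> (nat \<Rightarrow> 's::finite \<Rightarrow> 'a::finite \<Rightarrow> real) \<Rightarrow> real" where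
  "Thb H th = (\<Sum>k\<in>{..<H} \<times> UNIV. \<bar>th (fst k) (fst (snd k)) (snd (snd k))\<bar>)"

lemma Sx_ge: "t < H \<Longrightarrow> \<bar>xi (t, y, a)\<bar> \<le> Sx H xi"
  unfolding Sx_def by (rule member_le_sum[where i="(t,y,a)" and f="\<lambda>k. \<bar>xi k\<bar>"]) auto

lemma Sx_nonneg: "0 \<le> Sx H xi"
  unfolding Sx_def by (rule sum_nonneg) simp

lemma Thb_ge: "t < H \<Longrightarrow> \<bar>th t y a\<bar> \<le> Thb H th"
  unfolding Thb_def
  by (rule member_le_sum[where i="(t,y,a)" and f="\<lambda>k. \<bar>th (fst k) (fst (snd k)) (snd (snd k))\<bar>", simplified]) auto

lemma Thb_nonneg: "0 \<le> Thb H th"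
  unfolding Thb_def by (rule sum_nonneg) simp


definition cx :: "real \<Rightarrow> nat \<Rightarrow> (nat \<Rightarrow> 's::finite \<Rightarrow> 'a::finite \<Rightarrow> real) \<Rightarrow> (nat \<times> 's \<times> 'a \<Rightarrow> real) \<Rightarrow> real" where
  "cx lam H th xi = 1 + Thb H th + sqrt lam * Sx H xi"

lemma cx_ge1: "lam > 0 \<Longrightarrow> 1 \<le> cx lam H th xi"
  unfolding cx_def using Thb_nonneg[of H th] Sx_nonneg[of H xi] by simp

lemma Qrl_bound:
  fixes h :: "('s::finite, 'a::{finite,linorder}) episode list"
  assumes lam: "lam > 0" and v: "v > 0"
  shows "\<bar>Qrl th v lam H h xi t y a\<bar> \<le> real H * cx lam H th xi"
proof -
  let ?c = "cx lam H th xi"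
  have c0: "0 \<le> ?c" using cx_ge1[OF lam, of H th xi] by linarith
  have "\<forall>y a. \<bar>Qrl th v lam H h xi t y a\<bar> \<le> real (H - t) * ?c"
  proof (cases "H \<le> t")
    case True then show ?thesis by (simp add: Qrl_def)
  next
    case False then have "t \<le> H" by simp
    then show ?thesis
    proof (induction t rule: inc_induct)
      case base then show ?case by (simp add: Qrl_def)
    next
      case (step n)
      let ?m = "real (H - Suc n) * ?c"
      have m0: "0 \<le> ?m" using c0 by simp
      show ?case
      proof (intro allI)
        fix y a
        let ?Q = "Qrl th v lam H h xi (Suc n)"
        let ?o = "obs h n y a"
        let ?L = "sum_list (map (\<lambda>y'. of_bool (fst y') + vmax ?Q (snd y')) ?o)"
        have eq: "Qrl th v lam H h xi n y a = rlsvi_op th v lam h xi n ?Q y a"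
          unfolding Qrl_def using step.hyps by (simp add: backward_lt)
        have tb: "\<bar>of_bool (fst y') + vmax ?Q (snd y')\<bar> \<le> 1 + ?m" for y' :: "bool \<times> 's"
        proof -
          have "\<bar>of_bool (fst y') + vmax ?Q (snd y')\<bar> \<le> \<bar>of_bool (fst y') :: real\<bar> + \<bar>vmax ?Q (snd y')\<bar>"
            by (rule abs_triangle_ineq)
          also have "\<dots> \<le> 1 + ?m"
            using vmax_bound[of ?Q "snd y'" ?m] step.IH by (intro add_mono) auto
          finally show ?thesis .
        qed
        have L: "\<bar>?L\<bar> \<le> real (length ?o) * (1 + ?m)"
          by (rule sum_list_bound) (rule tb)
        have part1: "\<bar>sig2 lam v (length ?o) * (th n y a / lam + (1 / v) * ?L)\<bar> \<le> \<bar>th n y a\<bar> + (1 + ?m)"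
          by (rule sig2_bound[OF lam v L]) (use m0 in simp)
        have part2: "\<bar>sqrt (sig2 lam v (length ?o)) * xi (n, y, a)\<bar> \<le> sqrt lam * Sx H xi"
        proof -
          have "\<bar>sqrt (sig2 lam v (length ?o)) * xi (n, y, a)\<bar> = sqrt (sig2 lam v (length ?o)) * \<bar>xi (n, y, a)\<bar>"
            using sig2_pos[OF lam v, of "length ?o"] by (simp add: abs_mult)
          also have "\<dots> \<le> sqrt lam * Sx H xi"
            using sig2_le[OF lam v] sig2_pos[OF lam v] Sx_ge[OF step.hyps(2)] lam
            by (intro mult_mono) simp_all
          finally show ?thesis .
        qed
        have "\<bar>rlsvi_op th v lam h xi n ?Q y a\<bar> \<le> \<bar>sig2 lam v (length ?o) * (th n y a / lam + (1 / v) * ?L)\<bar> + \<bar>sqrt (sig2 lam v (length ?o)) * xi (n, y, a)\<bar>"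
          unfolding rlsvi_op_def by (rule abs_triangle_ineq)
        also have "\<dots> \<le> (\<bar>th n y a\<bar> + (1 + ?m)) + sqrt lam * Sx H xi"
          using part1 part2 by (rule add_mono)
        also have "\<dots> \<le> ?c + ?m"
          using Thb_ge[OF step.hyps(2), of th y a] unfolding cx_def by simp
        also have "\<dots> = real (H - n) * ?c"
          using step.hyps by (simp add: Suc_diff_Suc algebra_simps)
        finally show "\<bar>Qrl th v lam H h xi n y a\<bar> \<le> real (H - n) * ?c" unfolding eq .
      qed
    qed
  qed
  then have "\<bar>Qrl th v lam H h xi t y a\<bar> \<le> real (H - t) * ?c" by blast
  also have "\<dots> \<le> real H * ?c" using c0 by (intro mult_right_mono) simp_all
  finally show ?thesis .
qed

lemma abs_le_sq: "\<bar>x::real\<bar> \<le> 1 + x ^ 2"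
proof -
  have "0 \<le> (\<bar>x\<bar> - 1) ^ 2" by simp
  also have "(\<bar>x\<bar> - 1) ^ 2 = x ^ 2 - 2 * \<bar>x\<bar> + 1"
    by (simp add: power2_eq_square algebra_simps abs_mult_self_eq)
  finally have "2 * \<bar>x\<bar> \<le> x ^ 2 + 1" by simp
  moreover have "0 \<le> x ^ 2" by simp
  ultimately show ?thesis by linarith
qed

lemma integrable_std_abs: "integrable std_normal_distribution (\<lambda>x. \<bar>x\<bar>)"
proof -
  interpret prob_space std_normal_distribution by (rule prob_std_normal)
  have "integrable std_normal_distribution (\<lambda>x. 1 + x ^ 2)"
    using integrable_std_normal_distribution_moment[of 2] by simp
  then show ?thesis
    by (rule Bochner_Integration.integrable_bound)
       (simp_all add: abs_le_sq)
qed

lemma int_abs_comp: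
  assumes k: "k \<in> {..<H} \<times> UNIV"
  shows "integrable (noiseM H) (\<lambda>xi. \<bar>xi k\<bar>)"
proof -
  have d: "distr (noiseM H) std_normal_distribution (\<lambda>\<omega>. \<omega> k) = std_normal_distribution"
    unfolding noiseM_def by (rule distr_PiM_component) (simp_all add: prob_std_normal k)
  have m: "(\<lambda>\<omega>. \<omega> k) \<in> measurable (noiseM H) std_normal_distribution"
    by (subst measurable_cong_sets[OF refl sets_std_normal]) (rule noise_comp[OF k])
  have "integrable (distr (noiseM H) std_normal_distribution (\<lambda>\<omega>. \<omega> k)) (\<lambda>x. \<bar>x\<bar>)"
    unfolding d by (rule integrable_std_abs)
  then show ?thesis
    by (subst (asm) integrable_distr_eq[OF m]) simp_all
qed

lemma integrable_Sx: "integrable (noiseM H) (Sx H)"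
  unfolding Sx_def[abs_def]
  by (intro Bochner_Integration.integrable_sum int_abs_comp)

definition Bd :: "real \<Rightarrow> nat \<Rightarrow> (nat \<Rightarrow> 's::finite \<Rightarrow> 'a::finite \<Rightarrow> real) \<Rightarrow> (nat \<times> 's \<times> 'a \<Rightarrow> real) \<Rightarrow> real" where
  "Bd lam H th xi = (1 + real H) * (1 + 2 * (real H * cx lam H th xi))"

lemma integrable_Bd: "integrable (noiseM H) (Bd lam H th)"
proof -
  interpret prob_space "noiseM H" by (rule prob_noise)
  show ?thesis
    unfolding Bd_def[abs_def] cx_def
    by (intro Bochner_Integration.integrable_add integrable_mult_right integrable_const integrable_Sx)
qed

lemma pmf_int_bound:
  fixes f :: "'b \<Rightarrow> real"
  assumes "\<And>e. \<bar>f e\<bar> \<le> K"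
  shows "\<bar>\<integral>e. f e \<partial>measure_pmf p\<bar> \<le> K"
proof (cases "integrable (measure_pmf p) f")
  case True
  have "\<bar>\<integral>e. f e \<partial>measure_pmf p\<bar> \<le> (\<integral>e. \<bar>f e\<bar> \<partial>measure_pmf p)" by (rule integral_abs_bound)
  also have "\<dots> \<le> (\<integral>e. K \<partial>measure_pmf p)"
    using True assms by (intro integral_mono) auto
  also have "\<dots> = K" by simp
  finally show ?thesis .
next
  case False
  have "0 \<le> K" using assms[of undefined] by linarith
  then show ?thesis using False by (simp add: not_integrable_integral_eq)
qed


definition ES :: "nat \<Rightarrow> ('s, 'a) episode set" where
  "ES H = {e. length (snd e) = H}"

lemma finite_ES: "finite (ES H :: ('s::finite, 'a::finite) episode set)"
proof -
  have "ES H \<subseteq> (UNIV :: 's set) \<times> {xs :: ('a \<times> bool \<times> 's) list. set xs \<subseteq> UNIV \<and> length xs = H}"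
    by (auto simp: ES_def)
  moreover have "finite ((UNIV :: 's set) \<times> {xs :: ('a \<times> bool \<times> 's) list. set xs \<subseteq> UNIV \<and> length xs = H})"
    by (intro finite_cartesian_product finite_lists_length_eq) simp_all
  ultimately show ?thesis by (rule finite_subset)
qed

lemma episode_support: assumes "e \<in> set_pmf (episode_pmf M H \<pi>)" shows "e \<in> ES H"
proof -
  from assms obtain x s where e: "e = (x, s)" and s: "s \<in> set_pmf (traj M \<pi> 0 H x)"
    by (auto simp: episode_pmf_def)
  show ?thesis using traj_support[OF s] by (simp add: e ES_def)
qed

lemma episode_integral_sum:
  fixes F :: "('s::finite, 'a::finite) episode \<Rightarrow> real"
  shows "(\<integral>e. F e \<partial>measure_pmf (episode_pmf M H \<pi>)) = (\<Sum>e\<in>ES H. F e * pmf (episode_pmf M H \<pi>) e)"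
  by (rule integral_measure_pmf_real[OF finite_ES]) (rule episode_support)

lemma JE:
  fixes h :: "('s::finite, 'a::{finite,linorder}) episode list"
    and F :: "('s, 'a) mdp \<Rightarrow> (nat \<times> 's \<times> 'a \<Rightarrow> real) \<Rightarrow> ('s, 'a) episode \<Rightarrow> real"
  assumes A2: "\<And>x. (\<lambda>M. pmf (init M) x) \<in> borel_measurable P"
  assumes A3: "\<And>t x a y. (\<lambda>M. pmf (trans M t x a) y) \<in> borel_measurable P"
  assumes F: "\<And>e. (\<lambda>p. F (fst p) (snd p) e) \<in> borel_measurable (P \<Otimes>\<^sub>M noiseM H)"
  shows "(\<lambda>p. \<integral>e. F (fst p) (snd p) e \<partial>measure_pmf (episode_pmf (fst p) H (pol th v lam H h (snd p))))
     \<in> borel_measurable (P \<Otimes>\<^sub>M noiseM H)"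
  unfolding episode_integral_sum
  by (intro borel_measurable_sum borel_measurable_times F ep_pmf_joint[OF A2 A3])

lemma prob_int_bound:
  fixes f :: "'b \<Rightarrow> real"
  assumes N: "prob_space N" and B: "\<And>x. \<bar>f x\<bar> \<le> K"
  shows "\<bar>\<integral>x. f x \<partial>N\<bar> \<le> K"
proof (cases "integrable N f")
  case True
  interpret prob_space N by (rule N)
  have "\<bar>\<integral>x. f x \<partial>N\<bar> \<le> (\<integral>x. \<bar>f x\<bar> \<partial>N)" by (rule integral_abs_bound)
  also have "\<dots> \<le> (\<integral>x. K \<partial>N)"
    using True B by (intro integral_mono) auto
  also have "\<dots> = K" using prob_space by simp
  finally show ?thesis .
next
  case False
  have "0 \<le> K" using B[of undefined] by linarith
  then show ?thesis using False by (simp add: not_integrable_integral_eq)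
qed

lemma int_bound_le:
  fixes f g :: "'b \<Rightarrow> real"
  assumes g: "integrable N g" and B: "\<And>x. \<bar>f x\<bar> \<le> g x"
  shows "\<bar>\<integral>x. f x \<partial>N\<bar> \<le> (\<integral>x. g x \<partial>N)"
proof (cases "integrable N f")
  case True
  have "\<bar>\<integral>x. f x \<partial>N\<bar> \<le> (\<integral>x. \<bar>f x\<bar> \<partial>N)" by (rule integral_abs_bound)
  also have "\<dots> \<le> (\<integral>x. g x \<partial>N)"
    using True B g by (intro integral_mono) auto
  finally show ?thesis .
next
  case False
  have "0 \<le> (\<integral>x. g x \<partial>N)"
    using B by (intro integral_nonneg_AE AE_I2) (meson abs_ge_zero order_trans)
  then show ?thesis using False by (simp add: not_integrable_integral_eq)
qed

lemma HM:
  fixes P :: "('s::finite, 'a::{finite,linorder}) mdp measure"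
    and g :: "('s, 'a) mdp \<Rightarrow> ('s, 'a) episode list \<Rightarrow> real" and B :: real
  assumes A2: "\<And>x. (\<lambda>M. pmf (init M) x) \<in> borel_measurable P"
  assumes A3: "\<And>t x a y. (\<lambda>M. pmf (trans M t x a) y) \<in> borel_measurable P"
  shows "(\<And>h. (\<lambda>M. g M h) \<in> borel_measurable P) \<Longrightarrow> (\<And>M h. \<bar>g M h\<bar> \<le> B) \<Longrightarrow>
    (\<lambda>M. \<integral>h. g M h \<partial>histM th v lam H M k) \<in> borel_measurable P"
proof (induction k arbitrary: g)
  case 0
  have "(\<integral>h. g M h \<partial>histM th v lam H M 0) = g M []" for M
    unfolding histM.simps by (rule integral_return) simp_all
  then show ?case using 0 by simp
next
  case (Suc k)
  define g' where "g' M h = (\<integral>xi. (\<integral>e. g M (h @ [e]) \<partial>measure_pmf (episode_pmf M H (pol th v lam H h xi))) \<partial>noiseM H)" for M h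
  have eq: "(\<integral>h. g M h \<partial>histM th v lam H M (Suc k)) = (\<integral>h. g' M h \<partial>histM th v lam H M k)" for M
    unfolding g'_def by (rule histM_Suc_integral) (rule Suc.prems(2))
  have "(\<lambda>M. \<integral>h. g' M h \<partial>histM th v lam H M k) \<in> borel_measurable P"
  proof (rule Suc.IH)
    fix h
    interpret sigma_finite_measure "noiseM H" by (rule prob_space_imp_sigma_finite[OF prob_noise])
    have j: "(\<lambda>p. \<integral>e. g (fst p) (h @ [e]) \<partial>measure_pmf (episode_pmf (fst p) H (pol th v lam H h (snd p))))
       \<in> borel_measurable (P \<Otimes>\<^sub>M noiseM H)"
      by (rule JE[OF A2 A3, where F="\<lambda>M xi e. g M (h @ [e])"])
         (rule measurable_compose[OF measurable_fst Suc.prems(1)])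
    show "(\<lambda>M. g' M h) \<in> borel_measurable P"
      unfolding g'_def by (rule borel_measurable_lebesgue_integral) (use j in \<open>simp add: split_beta'\<close>)
  next
    fix M h
    show "\<bar>g' M h\<bar> \<le> B" unfolding g'_def
      by (intro prob_int_bound[OF prob_noise] pmf_int_bound Suc.prems(2))
  qed
  then show ?case unfolding eq .
qed


lemma Bd_nonneg: "lam > 0 \<Longrightarrow> 0 \<le> Bd lam H th xi"
  unfolding Bd_def using cx_ge1[of lam H th xi] by simp

lemma W_le_Bd:
  assumes lam: "lam > 0"
  shows "real H * cx lam H th xi \<le> Bd lam H th xi" and "real H \<le> Bd lam H th xi"
    and "real H * (1 + 2 * (real H * cx lam H th xi)) \<le> Bd lam H th xi"
proof -
  define W where "W = real H * cx lam H th xi"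
  have W0: "0 \<le> W" unfolding W_def using cx_ge1[OF lam, of H th xi] by simp
  have Bd: "Bd lam H th xi = (1 + 2 * W) + real H * (1 + 2 * W)"
    unfolding Bd_def W_def by (simp add: algebra_simps)
  have h0: "0 \<le> real H * (1 + 2 * W)" using W0 by simp
  have h1: "real H \<le> real H * (1 + 2 * W)" using W0 by (simp add: mult_le_cancel_left1)
  show "real H * cx lam H th xi \<le> Bd lam H th xi" using Bd h0 W0 unfolding W_def[symmetric] by linarith
  show "real H \<le> Bd lam H th xi" using Bd h1 W0 by linarith
  show "real H * (1 + 2 * (real H * cx lam H th xi)) \<le> Bd lam H th xi"
    using Bd W0 unfolding W_def[symmetric] by linarith
qed

lemma GOOD:
  fixes P :: "('s::finite, 'a::{finite,linorder}) mdp measure"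
    and f :: "('s, 'a) mdp \<Rightarrow> ('s, 'a) episode list \<Rightarrow> (nat \<times> 's \<times> 'a \<Rightarrow> real) \<Rightarrow> ('s, 'a) episode \<Rightarrow> real"
  assumes P: "prob_space P"
  assumes A2: "\<And>x. (\<lambda>M. pmf (init M) x) \<in> borel_measurable P"
  assumes A3: "\<And>t x a y. (\<lambda>M. pmf (trans M t x a) y) \<in> borel_measurable P"
  assumes lam: "lam > 0"
  assumes J: "\<And>h e. (\<lambda>p. f (fst p) h (snd p) e) \<in> borel_measurable (P \<Otimes>\<^sub>M noiseM H)"
  assumes Bnd: "\<And>M h xi e. \<bar>f M h xi e\<bar> \<le> Bd lam H th xi"
  shows "\<And>M h. M \<in> space P \<Longrightarrow> integrable (noiseM H)
            (\<lambda>xi. \<integral>e. f M h xi e \<partial>measure_pmf (episode_pmf M H (pol th v lam H h xi)))"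
    and "\<And>M. integrable (histM th v lam H M l)
            (\<lambda>h. \<integral>xi. (\<integral>e. f M h xi e \<partial>measure_pmf (episode_pmf M H (pol th v lam H h xi))) \<partial>noiseM H)"
    and "integrable P (\<lambda>M. \<integral>h. (\<integral>xi. (\<integral>e. f M h xi e \<partial>measure_pmf (episode_pmf M H (pol th v lam H h xi))) \<partial>noiseM H) \<partial>histM th v lam H M l)"
proof -
  define E where "E M h xi = (\<integral>e. f M h xi e \<partial>measure_pmf (episode_pmf M H (pol th v lam H h xi)))" for M h xi
  define CB where "CB = (\<integral>xi. Bd lam H th xi \<partial>noiseM H)"
  have JE': "(\<lambda>p. E (fst p) h (snd p)) \<in> borel_measurable (P \<Otimes>\<^sub>M noiseM H)" for h
    unfolding E_def by (rule JE[OF A2 A3, where F="\<lambda>M xi e. f M h xi e"]) (rule J)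
  have EB: "\<bar>E M h xi\<bar> \<le> Bd lam H th xi" for M h xi
    unfolding E_def by (rule pmf_int_bound) (rule Bnd)
  have a: "integrable (noiseM H) (E M h)" if M: "M \<in> space P" for M h
  proof (rule Bochner_Integration.integrable_bound[OF integrable_Bd])
    show "E M h \<in> borel_measurable (noiseM H)"
      using measurable_Pair2[OF JE' M] by simp
    show "AE xi in noiseM H. norm (E M h xi) \<le> norm (Bd lam H th xi)"
    proof (intro AE_I2)
      fix xi
      have "\<bar>E M h xi\<bar> \<le> Bd lam H th xi" by (rule EB)
      moreover have "0 \<le> Bd lam H th xi" by (rule Bd_nonneg[OF lam])
      ultimately show "norm (E M h xi) \<le> norm (Bd lam H th xi)" by simp
    qed
  qed
  then show "\<And>M h. M \<in> space P \<Longrightarrow> integrable (noiseM H)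
            (\<lambda>xi. \<integral>e. f M h xi e \<partial>measure_pmf (episode_pmf M H (pol th v lam H h xi)))"
    unfolding E_def by simp
  have b: "\<bar>\<integral>xi. E M h xi \<partial>noiseM H\<bar> \<le> CB" for M h
    unfolding CB_def by (rule int_bound_le[OF integrable_Bd]) (rule EB)
  have c: "integrable (histM th v lam H M l) (\<lambda>h. \<integral>xi. E M h xi \<partial>noiseM H)" for M
  proof (rule finite_measure.integrable_const_bound[OF prob_space.finite_measure[OF histM_prob]])
    show "AE h in histM th v lam H M l. norm (\<integral>xi. E M h xi \<partial>noiseM H) \<le> CB"
      using b by (intro AE_I2) simp
    show "(\<lambda>h. \<integral>xi. E M h xi \<partial>noiseM H) \<in> borel_measurable (histM th v lam H M l)"
      by (simp add: measurable_cong_sets[OF histM_sets refl])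
  qed
  then show "\<And>M. integrable (histM th v lam H M l)
            (\<lambda>h. \<integral>xi. (\<integral>e. f M h xi e \<partial>measure_pmf (episode_pmf M H (pol th v lam H h xi))) \<partial>noiseM H)"
    unfolding E_def by simp
  have d: "integrable P (\<lambda>M. \<integral>h. (\<integral>xi. E M h xi \<partial>noiseM H) \<partial>histM th v lam H M l)"
  proof (rule finite_measure.integrable_const_bound[OF prob_space.finite_measure[OF P]])
    show "AE M in P. norm (\<integral>h. (\<integral>xi. E M h xi \<partial>noiseM H) \<partial>histM th v lam H M l) \<le> CB"
      using prob_int_bound[OF histM_prob b] by (intro AE_I2) simp
    show "(\<lambda>M. \<integral>h. (\<integral>xi. E M h xi \<partial>noiseM H) \<partial>histM th v lam H M l) \<in> borel_measurable P"
    proof (rule HM[OF A2 A3])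
      fix h
      interpret sigma_finite_measure "noiseM H" by (rule prob_space_imp_sigma_finite[OF prob_noise])
      show "(\<lambda>M. \<integral>xi. E M h xi \<partial>noiseM H) \<in> borel_measurable P"
        by (rule borel_measurable_lebesgue_integral) (use JE'[of h] in \<open>simp add: split_beta'\<close>)
    next
      fix M h show "\<bar>\<integral>xi. E M h xi \<partial>noiseM H\<bar> \<le> CB" by (rule b)
    qed
  qed
  then show "integrable P (\<lambda>M. \<integral>h. (\<integral>xi. (\<integral>e. f M h xi e \<partial>measure_pmf (episode_pmf M H (pol th v lam H h xi))) \<partial>noiseM H) \<partial>histM th v lam H M l)"
    unfolding E_def by simp
qed


lemma rl_Qrl:
  fixes h :: "('s::finite, 'a::{finite,linorder}) episode list"
  shows "t < H \<Longrightarrow> rlsvi_op th v lam h xi t (Qrl th v lam H h xi (Suc t)) y a = Qrl th v lam H h xi t y a"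
  unfolding Qrl_def by (simp add: backward_lt)

lemma vmax_Qstar_meas:
  assumes A3: "\<And>t x a y. (\<lambda>M. pmf (trans M t x a) y) \<in> borel_measurable P"
  shows "(\<lambda>M. vmax (Qstar (M::('s::finite, 'a::finite) mdp) H t) y) \<in> borel_measurable P"
  unfolding vmax_def by (rule borel_measurable_Max) (simp_all add: Qstar_meas[OF A3])

lemma J2:
  fixes h :: "('s::finite, 'a::{finite,linorder}) episode list"
  shows "(\<lambda>p. vmax (Qrl th v lam H h (snd p) 0) (fst e)) \<in> borel_measurable (P \<Otimes>\<^sub>M noiseM H)"
  by (rule measurable_compose[OF measurable_snd vmax_Qrl_meas])

lemma B2:
  fixes h :: "('s::finite, 'a::{finite,linorder}) episode list"
  assumes lam: "lam > 0" and v: "v > 0"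
  shows "\<bar>vmax (Qrl th v lam H h xi 0) y\<bar> \<le> Bd lam H th xi"
proof -
  have "\<bar>vmax (Qrl th v lam H h xi 0) y\<bar> \<le> real H * cx lam H th xi"
    by (rule vmax_bound) (rule Qrl_bound[OF lam v])
  also have "\<dots> \<le> Bd lam H th xi" by (rule W_le_Bd(1)[OF lam])
  finally show ?thesis .
qed

lemma J3:
  assumes A3: "\<And>t x a y. (\<lambda>M. pmf (trans M t x a) y) \<in> borel_measurable P"
  shows "(\<lambda>p. vmax (Qstar (fst p :: ('s::finite, 'a::finite) mdp) H 0) y) \<in> borel_measurable (P \<Otimes>\<^sub>M noiseM H)"
  by (rule measurable_compose[OF measurable_fst vmax_Qstar_meas[OF A3]])

lemma B3:
  fixes M :: "('s::finite, 'a::{finite,linorder}) mdp"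
  assumes lam: "lam > 0"
  shows "\<bar>vmax (Qstar M H 0) y\<bar> \<le> Bd lam H th xi"
proof -
  have "\<bar>vmax (Qstar M H 0) y\<bar> \<le> real H"
    by (rule vmax_bound) (rule Qstar_bound)
  also have "\<dots> \<le> Bd lam H th xi" by (rule W_le_Bd(2)[OF lam])
  finally show ?thesis .
qed

lemma J4:
  fixes h :: "('s::finite, 'a::{finite,linorder}) episode list"
  assumes A3: "\<And>t x a y. (\<lambda>M. pmf (trans M t x a) y) \<in> borel_measurable P"
  shows "(\<lambda>p. \<Sum>t<H.
              rlsvi_op th v lam h (snd p) t (Qrl th v lam H h (snd p) (Suc t)) (ep_state e t) (ep_action e t)
              - bellman (fst p) t (Qrl th v lam H h (snd p) (Suc t)) (ep_state e t) (ep_action e t))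
     \<in> borel_measurable (P \<Otimes>\<^sub>M noiseM H)"
proof (rule borel_measurable_sum)
  fix t assume t: "t \<in> {..<H}"
  then have "t < H" by simp
  show "(\<lambda>p. rlsvi_op th v lam h (snd p) t (Qrl th v lam H h (snd p) (Suc t)) (ep_state e t) (ep_action e t)
              - bellman (fst p) t (Qrl th v lam H h (snd p) (Suc t)) (ep_state e t) (ep_action e t))
     \<in> borel_measurable (P \<Otimes>\<^sub>M noiseM H)"
    unfolding rl_Qrl[OF \<open>t < H\<close>]
    by (intro borel_measurable_diff measurable_compose[OF measurable_snd Qrl_meas] bellman_Qrl_joint[OF A3])
qed

lemma B4:
  fixes h :: "('s::finite, 'a::{finite,linorder}) episode list"
    and M :: "('s, 'a) mdp"
  assumes lam: "lam > 0" and v: "v > 0"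
  shows "\<bar>\<Sum>t<H.
              rlsvi_op th v lam h xi t (Qrl th v lam H h xi (Suc t)) (ep_state e t) (ep_action e t)
              - bellman M t (Qrl th v lam H h xi (Suc t)) (ep_state e t) (ep_action e t)\<bar> \<le> Bd lam H th xi"
proof -
  let ?W = "real H * cx lam H th xi"
  have "\<bar>\<Sum>t<H.
              rlsvi_op th v lam h xi t (Qrl th v lam H h xi (Suc t)) (ep_state e t) (ep_action e t)
              - bellman M t (Qrl th v lam H h xi (Suc t)) (ep_state e t) (ep_action e t)\<bar>
     \<le> (\<Sum>t<H. \<bar>rlsvi_op th v lam h xi t (Qrl th v lam H h xi (Suc t)) (ep_state e t) (ep_action e t)
              - bellman M t (Qrl th v lam H h xi (Suc t)) (ep_state e t) (ep_action e t)\<bar>)"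
    by (rule sum_abs)
  also have "\<dots> \<le> (\<Sum>t<H. ?W + (1 + ?W))"
  proof (rule sum_mono)
    fix t assume "t \<in> {..<H}"
    then have t: "t < H" by simp
    have "\<bar>rlsvi_op th v lam h xi t (Qrl th v lam H h xi (Suc t)) (ep_state e t) (ep_action e t)
              - bellman M t (Qrl th v lam H h xi (Suc t)) (ep_state e t) (ep_action e t)\<bar>
        \<le> \<bar>Qrl th v lam H h xi t (ep_state e t) (ep_action e t)\<bar>
          + \<bar>bellman M t (Qrl th v lam H h xi (Suc t)) (ep_state e t) (ep_action e t)\<bar>"
      unfolding rl_Qrl[OF t] by (rule abs_triangle_ineq4)
    also have "\<dots> \<le> ?W + (1 + ?W)"
      by (intro add_mono Qrl_bound[OF lam v] bellman_bound)
    finally show "\<bar>rlsvi_op th v lam h xi t (Qrl th v lam H h xi (Suc t)) (ep_state e t) (ep_action e t)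
              - bellman M t (Qrl th v lam H h xi (Suc t)) (ep_state e t) (ep_action e t)\<bar> \<le> ?W + (1 + ?W)" .
  qed
  also have "\<dots> = real H * (1 + 2 * ?W)" by simp
  also have "\<dots> \<le> Bd lam H th xi" by (rule W_le_Bd(3)[OF lam])
  finally show ?thesis .
qed


theorem mainTheorem3:
  fixes prior :: "('s::finite, 'a::{finite,linorder}) mdp measure"
    and th :: "nat \<Rightarrow> 's \<Rightarrow> 'a \<Rightarrow> real"
    and v lam :: real and H l :: nat
  assumes "prob_space prior"
    and "\<And>x. (\<lambda>M. pmf (init M) x) \<in> borel_measurable prior"
    and "\<And>t x a y. (\<lambda>M. pmf (trans M t x a) y) \<in> borel_measurable prior"
    and "v > 0" and "lam > 0"
    and "rl_expect th v lam H prior l (\<lambda>M h xi e. vmax (Qrl th v lam H h xi 0) (fst e))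
         \<ge> rl_expect th v lam H prior l (\<lambda>M h xi e. vmax (Qstar M H 0) (fst e))"
  shows "rl_expect th v lam H prior l
           (\<lambda>M h xi e. Vstar M H (fst e) - Vpi M H (pol th v lam H h xi) (fst e))
         \<le> rl_expect th v lam H prior l
           (\<lambda>M h xi e. \<Sum>t<H.
              rlsvi_op th v lam h xi t (Qrl th v lam H h xi (Suc t)) (ep_state e t) (ep_action e t)
              - bellman M t (Qrl th v lam H h xi (Suc t)) (ep_state e t) (ep_action e t))"
proof -
  have P: "prob_space prior" by (rule assms(1))
  note A2 = assms(2) and A3 = assms(3)
  have v: "v > 0" and lam: "lam > 0" using assms(4,5) .
  define f1 :: "('s, 'a) mdp \<Rightarrow> ('s, 'a) episode list \<Rightarrow> (nat \<times> 's \<times> 'a \<Rightarrow> real) \<Rightarrow> ('s, 'a) episode \<Rightarrow> real"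
    where "f1 = (\<lambda>M h xi e. Vstar M H (fst e) - Vpi M H (pol th v lam H h xi) (fst e))"
  define f2 :: "('s, 'a) mdp \<Rightarrow> ('s, 'a) episode list \<Rightarrow> (nat \<times> 's \<times> 'a \<Rightarrow> real) \<Rightarrow> ('s, 'a) episode \<Rightarrow> real"
    where "f2 = (\<lambda>M h xi e. vmax (Qrl th v lam H h xi 0) (fst e))"
  define f3 :: "('s, 'a) mdp \<Rightarrow> ('s, 'a) episode list \<Rightarrow> (nat \<times> 's \<times> 'a \<Rightarrow> real) \<Rightarrow> ('s, 'a) episode \<Rightarrow> real"
    where "f3 = (\<lambda>M h xi e. vmax (Qstar M H 0) (fst e))"
  define f4 :: "('s, 'a) mdp \<Rightarrow> ('s, 'a) episode list \<Rightarrow> (nat \<times> 's \<times> 'a \<Rightarrow> real) \<Rightarrow> ('s, 'a) episode \<Rightarrow> real"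
    where "f4 = (\<lambda>M h xi e. \<Sum>t<H.
              rlsvi_op th v lam h xi t (Qrl th v lam H h xi (Suc t)) (ep_state e t) (ep_action e t)
              - bellman M t (Qrl th v lam H h xi (Suc t)) (ep_state e t) (ep_action e t))"
  define E where "E f M h xi = (\<integral>e. f M h xi e \<partial>measure_pmf (episode_pmf M H (pol th v lam H h xi)))"
    for f :: "('s, 'a) mdp \<Rightarrow> ('s, 'a) episode list \<Rightarrow> (nat \<times> 's \<times> 'a \<Rightarrow> real) \<Rightarrow> ('s, 'a) episode \<Rightarrow> real"
    and M h xi
  define G where "G f M h = (\<integral>xi. E f M h xi \<partial>noiseM H)" for f M h
  define Phi where "Phi f M = (\<integral>h. G f M h \<partial>histM th v lam H M l)" for f M
  have rl: "rl_expect th v lam H prior l f = (\<integral>M. Phi f M \<partial>prior)" for f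
    unfolding rl_expect_def Phi_def G_def E_def ..

  have J2': "\<And>h e. (\<lambda>p. f2 (fst p) h (snd p) e) \<in> borel_measurable (prior \<Otimes>\<^sub>M noiseM H)"
    unfolding f2_def by (rule J2)
  have B2': "\<And>M h xi e. \<bar>f2 M h xi e\<bar> \<le> Bd lam H th xi"
    unfolding f2_def by (rule B2[OF lam v])
  have J3': "\<And>h e. (\<lambda>p. f3 (fst p) h (snd p) e) \<in> borel_measurable (prior \<Otimes>\<^sub>M noiseM H)"
    unfolding f3_def by (rule J3[OF A3])
  have B3': "\<And>M h xi e. \<bar>f3 M h xi e\<bar> \<le> Bd lam H th xi"
    unfolding f3_def by (rule B3[OF lam])
  have J4': "\<And>h e. (\<lambda>p. f4 (fst p) h (snd p) e) \<in> borel_measurable (prior \<Otimes>\<^sub>M noiseM H)"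
    unfolding f4_def by (rule J4[OF A3])
  have B4': "\<And>M h xi e. \<bar>f4 M h xi e\<bar> \<le> Bd lam H th xi"
    unfolding f4_def by (rule B4[OF lam v])
  note G2 = GOOD[where f=f2 and v=v, OF P A2 A3 lam J2' B2']
  note G3 = GOOD[where f=f3 and v=v, OF P A2 A3 lam J3' B3']
  note G4 = GOOD[where f=f4 and v=v, OF P A2 A3 lam J4' B4']
  have a2: "integrable (noiseM H) (E f2 M h)" and a3: "integrable (noiseM H) (E f3 M h)"
    and a4: "integrable (noiseM H) (E f4 M h)" if "M \<in> space prior" for M h
    unfolding E_def using G2(1)[OF that] G3(1)[OF that] G4(1)[OF that] by auto
  have c2: "integrable (histM th v lam H M l) (G f2 M)" and c3: "integrable (histM th v lam H M l) (G f3 M)"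
    and c4: "integrable (histM th v lam H M l) (G f4 M)" for M
    unfolding G_def E_def using G2(2) G3(2) G4(2) by auto
  have d2: "integrable prior (Phi f2)" and d3: "integrable prior (Phi f3)" and d4: "integrable prior (Phi f4)"
    unfolding Phi_def G_def E_def using G2(3) G3(3) G4(3) by auto
  have pw: "E f1 M h xi = E f3 M h xi - E f2 M h xi + E f4 M h xi" for M h xi
    unfolding E_def f1_def f2_def f3_def f4_def by (rule pointwise)
  have Geq: "G f1 M h = G f3 M h - G f2 M h + G f4 M h" if M: "M \<in> space prior" for M h
  proof -
    have "G f1 M h = (\<integral>xi. (E f3 M h xi - E f2 M h xi) + E f4 M h xi \<partial>noiseM H)"
      unfolding G_def pw ..
    also have "\<dots> = (\<integral>xi. E f3 M h xi - E f2 M h xi \<partial>noiseM H) + (\<integral>xi. E f4 M h xi \<partial>noiseM H)"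
      by (rule Bochner_Integration.integral_add)
         (rule Bochner_Integration.integrable_diff[OF a3[OF M] a2[OF M]], rule a4[OF M])
    also have "(\<integral>xi. E f3 M h xi - E f2 M h xi \<partial>noiseM H) = G f3 M h - G f2 M h"
      unfolding G_def by (rule Bochner_Integration.integral_diff[OF a3[OF M] a2[OF M]])
    finally show ?thesis by (simp add: G_def)
  qed
  have Peq: "Phi f1 M = Phi f3 M - Phi f2 M + Phi f4 M" if M: "M \<in> space prior" for M
  proof -
    have "Phi f1 M = (\<integral>h. (G f3 M h - G f2 M h) + G f4 M h \<partial>histM th v lam H M l)"
      unfolding Phi_def by (rule Bochner_Integration.integral_cong[OF refl]) (rule Geq[OF M])
    also have "\<dots> = (\<integral>h. G f3 M h - G f2 M h \<partial>histM th v lam H M l) + (\<integral>h. G f4 M h \<partial>histM th v lam H M l)"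
      by (rule Bochner_Integration.integral_add)
         (rule Bochner_Integration.integrable_diff[OF c3 c2], rule c4)
    also have "(\<integral>h. G f3 M h - G f2 M h \<partial>histM th v lam H M l) = Phi f3 M - Phi f2 M"
      unfolding Phi_def by (rule Bochner_Integration.integral_diff[OF c3 c2])
    finally show ?thesis by (simp add: Phi_def)
  qed
  have "(\<integral>M. Phi f1 M \<partial>prior) = (\<integral>M. (Phi f3 M - Phi f2 M) + Phi f4 M \<partial>prior)"
    by (rule Bochner_Integration.integral_cong[OF refl]) (simp add: Peq)
  also have "\<dots> = (\<integral>M. Phi f3 M - Phi f2 M \<partial>prior) + (\<integral>M. Phi f4 M \<partial>prior)"
    by (rule Bochner_Integration.integral_add)
       (rule Bochner_Integration.integrable_diff[OF d3 d2], rule d4)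
  also have "(\<integral>M. Phi f3 M - Phi f2 M \<partial>prior) = (\<integral>M. Phi f3 M \<partial>prior) - (\<integral>M. Phi f2 M \<partial>prior)"
    by (rule Bochner_Integration.integral_diff[OF d3 d2])
  finally have main: "(\<integral>M. Phi f1 M \<partial>prior) = (\<integral>M. Phi f3 M \<partial>prior) - (\<integral>M. Phi f2 M \<partial>prior) + (\<integral>M. Phi f4 M \<partial>prior)" .
  have hyp: "(\<integral>M. Phi f3 M \<partial>prior) \<le> (\<integral>M. Phi f2 M \<partial>prior)"
    using assms(6) unfolding rl f2_def f3_def .
  have "(\<integral>M. Phi f1 M \<partial>prior) \<le> (\<integral>M. Phi f4 M \<partial>prior)"
    using main hyp by linarith
  then show ?thesis unfolding rl f1_def f4_def .
qed

end
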